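(* Let $1\le p<\infty$. Let $\Pi=(t_k)_{k\in\mathbb{Z}}$ be a sampling sequence with constants $0<\delta\le\Delta$, and let $\chi$ be a kernel satisfying $(\chi1)$–$(\chi4)$, where in $(\chi3)$ the $\varphi$-function is $\psi(u)=u$, i.e. $|\chi(x,u)-\chi(x,v)|\le L(x)|u-v|$, with $L$ satisfying $(L1)$, $(L2)$ and $M_p(L):=\int_{\mathbb{R}}L(u)|u|^p\,du<+\infty$. Let $M_2>0$, $\theta_0>0$ be such that $\mathcal{T}_w(x)\le M_2w^{-\theta_0}$ for all $x\in\mathbb{R}$ and all sufficiently large $w$. Then for every $f\in L^p(\mathbb{R})$ and every sufficiently large $w>0$, $$\|S_wf-f\|_p\le\delta^{-1/p}[2m_{0,\Pi}(L)]^{(p-1)/p}\left[\|L\|_1+M_p(L)\right]^{1/p}\omega_p(f,1/w)+\delta^{-1/p}m_{0,\Pi}(L)\Delta^{1/p}\omega_p(f,\Delta/w)+M_2\|f\|_p\,w^{-\theta_0}.$$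
   Context: A $\varphi$-function is a continuous non-decreasing $\varphi:[0,\infty)\to[0,\infty)$ with $\varphi(0)=0$, $\varphi(u)>0$ for $u>0$, $\varphi(u)\to\infty$. A sampling sequence $\Pi=(t_k)$: strictly increasing reals, $t_k\to\pm\infty$ as $k\to\pm\infty$, with $\delta\le\Delta_k:=t_{k+1}-t_k\le\Delta$ for constants $0<\delta\le\Delta$. A kernel is $\chi:\mathbb{R}^2\to\mathbb{R}$ with: $(\chi1)$ $k\mapsto\chi(wx-t_k,u)\in\ell^1(\mathbb{Z})$ for all $x,u$, $w>0$; $(\chi2)$ $\chi(x,0)=0$; $(\chi3)$ measurable $L:\mathbb{R}\to[0,\infty)$ and a $\varphi$-function $\psi$ with $|\chi(x,u)-\chi(x,v)|\le L(x)\psi(|u-v|)$; $(\chi4)$ some $\theta_0>0$ with $\mathcal{T}_w(x):=\sup_{u\ne0}\left|\frac1u\sum_k\chi(wx-t_k,u)-1\right|=\mathcal{O}(w^{-\theta_0})$ as $w\to\infty$ uniformly in $x$. $(L1)$: $L\in L^1(\mathbb{R})$, bounded near $0$; $(L2)$: some $\beta_0>0$ with $\sup_u\sum_kL(u-t_k)|u-t_k|^{\beta_0}<\infty$. $m_{0,\Pi}(L):=\sup_{u\in\mathbb{R}}\sum_kL(u-t_k)$ (finite). Operators: $(S_wf)(x):=\sum_k\chi\!\left(wx-t_k,\frac{w}{\Delta_k}\int_{t_k/w}^{t_{k+1}/w}f(u)\,du\right)$. $L^p$-modulus of smoothness: $\omega_p(f,\delta'):=\sup_{|h|\le\delta'}\|f(\cdot+h)-f(\cdot)\|_p$.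 *)

theory Defs
  imports "HOL-Analysis.Analysis"
begin

definition sampling_seq :: "(int \<Rightarrow> real) \<Rightarrow> real \<Rightarrow> real \<Rightarrow> bool" where
  "sampling_seq t \<delta> \<Delta> \<longleftrightarrow> strict_mono t \<and> filterlim t at_top at_top \<and> filterlim t at_bot at_bot
     \<and> 0 < \<delta> \<and> \<delta> \<le> \<Delta> \<and> (\<forall>k. \<delta> \<le> t (k + 1) - t k \<and> t (k + 1) - t k \<le> \<Delta>)"

definition Tw :: "(real \<Rightarrow> real \<Rightarrow> real) \<Rightarrow> (int \<Rightarrow> real) \<Rightarrow> real \<Rightarrow> real \<Rightarrow> ereal" where
  "Tw K t w x = (SUP u\<in>UNIV - {0}. ereal \<bar>(1 / u) * (\<Sum>\<^sub>\<infinity>k. K (w * x - t k) u) - 1\<bar>)"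

definition kernel_lip :: "(real \<Rightarrow> real \<Rightarrow> real) \<Rightarrow> (int \<Rightarrow> real) \<Rightarrow> (real \<Rightarrow> real) \<Rightarrow> bool" where
  "kernel_lip K t L \<longleftrightarrow>
     (\<forall>x u w. w > 0 \<longrightarrow> (\<lambda>k. \<bar>K (w * x - t k) u\<bar>) summable_on UNIV)
   \<and> (\<forall>x. K x 0 = 0)
   \<and> L \<in> borel_measurable lborel \<and> (\<forall>x. 0 \<le> L x)
   \<and> (\<forall>x u v. \<bar>K x u - K x v\<bar> \<le> L x * \<bar>u - v\<bar>)
   \<and> (\<exists>\<theta>0. \<theta>0 > 0 \<and> (\<exists>C. \<forall>\<^sub>F w in at_top. \<forall>x. Tw K t w x \<le> ereal (C * w powr (- \<theta>0))))"

definition cond_L1 :: "(real \<Rightarrow> real) \<Rightarrow> bool" where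
  "cond_L1 L \<longleftrightarrow> integrable lborel L \<and> (\<exists>\<epsilon>. \<epsilon> > 0 \<and> (\<exists>B. \<forall>x. \<bar>x\<bar> < \<epsilon> \<longrightarrow> \<bar>L x\<bar> \<le> B))"

definition cond_L2 :: "(real \<Rightarrow> real) \<Rightarrow> (int \<Rightarrow> real) \<Rightarrow> bool" where
  "cond_L2 L t \<longleftrightarrow> (\<exists>\<beta>0. \<beta>0 > 0 \<and>
     (SUP u. (\<Sum>\<^sub>\<infinity>k. ennreal (L (u - t k) * \<bar>u - t k\<bar> powr \<beta>0))) < \<infinity>)"

definition m0_enn :: "(real \<Rightarrow> real) \<Rightarrow> (int \<Rightarrow> real) \<Rightarrow> ennreal" where
  "m0_enn L t = (SUP u. (\<Sum>\<^sub>\<infinity>k. ennreal (L (u - t k))))"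

definition m0 :: "(real \<Rightarrow> real) \<Rightarrow> (int \<Rightarrow> real) \<Rightarrow> real" where
  "m0 L t = enn2real (m0_enn L t)"

definition in_Lp :: "real \<Rightarrow> (real \<Rightarrow> real) \<Rightarrow> bool" where
  "in_Lp p f \<longleftrightarrow> f \<in> borel_measurable lborel \<and> (\<integral>\<^sup>+ x. ennreal (\<bar>f x\<bar> powr p) \<partial>lborel) < \<infinity>"

definition Lp_norm :: "real \<Rightarrow> (real \<Rightarrow> real) \<Rightarrow> ereal" where
  "Lp_norm p g = (let I = (\<integral>\<^sup>+ x. ennreal (\<bar>g x\<bar> powr p) \<partial>lborel) in
      if I = \<infinity> then \<infinity> else ereal (enn2real I powr (1 / p)))"

definition omega_p :: "real \<Rightarrow> (real \<Rightarrow> real) \<Rightarrow> real \<Rightarrow> ereal" where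
  "omega_p p f d = (SUP h\<in>{h. \<bar>h\<bar> \<le> d}. Lp_norm p (\<lambda>x. f (x + h) - f x))"

definition S_op :: "(real \<Rightarrow> real \<Rightarrow> real) \<Rightarrow> (int \<Rightarrow> real) \<Rightarrow> real \<Rightarrow> (real \<Rightarrow> real) \<Rightarrow> real \<Rightarrow> real" where
  "S_op K t w f x = (\<Sum>\<^sub>\<infinity>k. K (w * x - t k)
      ((w / (t (k + 1) - t k)) * (LINT u:{t k / w..t (k + 1) / w}|lborel. f u)))"

end

theory Submission
  imports Defs "HOL-Library.Nat_Bijection"
begin

definition pw :: "real \<Rightarrow> ennreal \<Rightarrow> ennreal" where
  "pw p z = (if z = top then top else ennreal (enn2real z powr p))"

lemma pw_ennreal[simp]: "0 \<le> r \<Longrightarrow> pw p (ennreal r) = ennreal (r powr p)"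
  by (simp add: pw_def)


lemma pw_top'[simp]: "pw p top = top" by (simp add: pw_def)

lemma pw_0[simp]: "pw p 0 = 0" by (simp add: pw_def)

lemma pw_mono: assumes "0 < p" "a \<le> b" shows "pw p a \<le> pw p b"
proof (cases "b = top")
  case False
  then have "a \<noteq> top" using assms by (auto simp: top_unique)
  with False assms show ?thesis unfolding pw_def
    by (auto intro!: ennreal_leI powr_mono2 enn2real_mono simp: less_top)
qed simp

lemma pw_measurable[measurable]:
  assumes [measurable]: "F \<in> borel_measurable M"
  shows "(\<lambda>x. pw p (F x)) \<in> borel_measurable M"
  unfolding pw_def by measurable

lemma pw_mult: assumes "0 < p" "0 \<le> c" shows "pw p (ennreal c * z) = ennreal (c powr p) * pw p z"
proof (cases "z = top")
  case True
  then show ?thesis using assms by (cases "c = 0") (auto simp: ennreal_mult_top ennreal_top_mult)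
next
  case False
  define r where "r = enn2real z"
  have r: "z = ennreal r" "0 \<le> r" using False by (auto simp: r_def less_top)
  have "ennreal c * z = ennreal (c * r)" using r assms by (simp add: ennreal_mult)
  then have "pw p (ennreal c * z) = ennreal ((c * r) powr p)" using r assms by simp
  also have "\<dots> = ennreal (c powr p) * ennreal (r powr p)" using r assms by (simp add: powr_mult ennreal_mult)
  finally show ?thesis using r by simp
qed

lemma pw_eq_0_iff: assumes "0 < p" shows "pw p z = 0 \<longleftrightarrow> z = 0"
  using assms unfolding pw_def
  by (cases z rule: ennreal_cases) auto

lemma pw_one[simp]: "pw 1 z = z"
  unfolding pw_def by (cases z rule: ennreal_cases) auto

lemma infsum_int_ennreal: "infsum (g :: int \<Rightarrow> ennreal) UNIV = (\<Sum>n. g (int_decode n))"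
proof -
  have "infsum g UNIV = infsum (\<lambda>n. g (int_decode n)) UNIV"
    using infsum_reindex_bij_betw[OF bij_int_decode, of g] by simp
  also have "\<dots> = (\<Sum>n. g (int_decode n))"
  proof -
    have "(\<lambda>n. g (int_decode n)) sums infsum (\<lambda>n. g (int_decode n)) UNIV"
      by (intro has_sum_imp_sums has_sum_infsum nonneg_summable_on_complete) simp
    then show ?thesis by (rule sums_unique)
  qed
  finally show ?thesis .
qed

lemma real_infsum_bound:
  fixes c :: "int \<Rightarrow> real"
  assumes "infsum (\<lambda>k. ennreal \<bar>c k\<bar>) UNIV < top"
  shows "c summable_on UNIV" "ennreal \<bar>infsum c UNIV\<bar> \<le> infsum (\<lambda>k. ennreal \<bar>c k\<bar>) UNIV"
proof -
  let ?S = "infsum (\<lambda>k. ennreal \<bar>c k\<bar>) UNIV"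
  have fin: "sum (\<lambda>k. \<bar>c k\<bar>) F \<le> enn2real ?S" if "finite F" for F
  proof -
    have "ennreal (sum (\<lambda>k. \<bar>c k\<bar>) F) = sum (\<lambda>k. ennreal \<bar>c k\<bar>) F"
      by (simp add: sum_ennreal)
    also have "\<dots> \<le> ?S"
      using nonneg_infsum_complete[of UNIV "\<lambda>k. ennreal \<bar>c k\<bar>"] that
      by (auto intro!: SUP_upper)
    finally show ?thesis using assms
      by (metis enn2real_ennreal enn2real_mono sum_nonneg abs_ge_zero)
  qed
  have "bdd_above (sum (\<lambda>x. norm (c x)) ` {F. F\<subseteq>UNIV \<and> finite F})"
    by (rule bdd_aboveI[where M="enn2real ?S"]) (use fin in \<open>auto simp: real_norm_def\<close>)
  then show sc: "c summable_on UNIV"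
    by (metis abs_summable_iff_bdd_above summable_on_iff_abs_summable_on_real)
  then have ac: "(\<lambda>k. \<bar>c k\<bar>) summable_on UNIV"
    using summable_on_iff_abs_summable_on_real by auto
  have "\<bar>infsum c UNIV\<bar> \<le> infsum (\<lambda>k. \<bar>c k\<bar>) UNIV"
    using norm_infsum_bound[of c UNIV] sc summable_on_iff_abs_summable_on_real by auto
  moreover have "ennreal (infsum (\<lambda>k. \<bar>c k\<bar>) UNIV) = ?S"
  proof -
    have "ennreal (infsum (\<lambda>k. \<bar>c k\<bar>) UNIV) = (SUP F\<in>{F. finite F \<and> F \<subseteq> UNIV}. ennreal (sum (\<lambda>k. \<bar>c k\<bar>) F))"
      by (rule infsum_nonneg_is_SUPREMUM_ennreal) (use ac in auto)
    also have "\<dots> = (SUP F\<in>{F. finite F \<and> F \<subseteq> UNIV}. sum (\<lambda>k. ennreal \<bar>c k\<bar>) F)"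
      by simp
    also have "\<dots> = ?S"
      by (rule nonneg_infsum_complete[symmetric]) simp
    finally show ?thesis .
  qed
  ultimately show "ennreal \<bar>infsum c UNIV\<bar> \<le> ?S"
    using ennreal_leI by fastforce
qed

lemma young_real:
  fixes p y m :: real
  assumes p: "1 \<le> p" and y: "0 \<le> y" and m: "0 < m"
  shows "y \<le> (1/p) * (y powr p / m powr (p-1)) + (1 - 1/p) * m"
proof (cases "p = 1")
  case True then show ?thesis using y m by simp
next
  case False
  then have p1: "p > 1" using p by simp
  define q where "q = p / (p - 1)"
  have q1: "q > 1" using p1 by (simp add: q_def field_simps)
  have pq: "1/p + 1/q = 1" using p1 by (simp add: q_def field_simps)
  define a where "a = y / m powr ((p-1)/p)"
  define b where "b = m powr ((p-1)/p)"
  have ab: "a * b = y" using m by (simp add: a_def b_def)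
  have "a * b \<le> a powr p / p + b powr q / q"
    by (rule Youngs_inequality[OF p1 q1 pq]) (use y m in \<open>auto simp: a_def b_def\<close>)
  moreover have "a powr p / p = 1/p * (y powr p / m powr (p-1))"
    using y m p1 by (simp add: a_def powr_divide powr_powr)
  moreover have "b powr q = m"
    using m p1 by (simp add: b_def q_def powr_powr)
  moreover have "b powr q / q = (1 - 1/p) * m" using p1 m \<open>b powr q = m\<close> by (simp add: q_def field_simps)
  ultimately show ?thesis using ab by linarith
qed

lemma young_enn:
  assumes p: "1 \<le> p" and m: "0 < m"
  shows "y \<le> ennreal (1/(p * m powr (p-1))) * pw p y + ennreal ((1 - 1/p) * m)"
proof (cases "y = top")
  case True
  have "ennreal (1/(p * m powr (p-1))) \<noteq> 0" using p m by simp
  then show ?thesis using True by (simp add: ennreal_mult_top)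
next
  case False
  define r where "r = enn2real y"
  have r: "y = ennreal r" "0 \<le> r" using False by (auto simp: r_def less_top)
  have "r \<le> (1/p) * (r powr p / m powr (p-1)) + (1 - 1/p) * m"
    by (rule young_real) (use p m r in auto)
  also have "\<dots> = 1/(p * m powr (p-1)) * r powr p + (1 - 1/p) * m" by simp
  finally have "ennreal r \<le> ennreal (1/(p * m powr (p-1)) * r powr p + (1 - 1/p) * m)"
    by (rule ennreal_leI)
  also have "\<dots> = ennreal (1/(p * m powr (p-1))) * ennreal (r powr p) + ennreal ((1 - 1/p) * m)"
  proof -
    have "ennreal (1/(p * m powr (p-1)) * r powr p) = ennreal (1/(p * m powr (p-1))) * ennreal (r powr p)"
      by (rule ennreal_mult) (use p m in auto)
    moreover have "ennreal (1/(p * m powr (p-1)) * r powr p + (1 - 1/p) * m) = 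
       ennreal (1/(p * m powr (p-1)) * r powr p) + ennreal ((1 - 1/p) * m)"
      by (rule ennreal_plus) (use p m in auto)
    ultimately show ?thesis by simp
  qed
  finally have X: "ennreal r \<le> ennreal (1/(p * m powr (p-1))) * ennreal (r powr p) + ennreal ((1 - 1/p) * m)" .
  have pwy: "pw p y = ennreal (r powr p)" using r by simp
  show ?thesis unfolding pwy unfolding r(1) by (rule X)
qed



lemma alg_jensen:
  fixes c M p :: real
  assumes c: "0 < c" and M: "0 < M" and p: "1 < p"
  defines "m \<equiv> (c / M) powr (1/p)"
  shows "1/(p * m powr (p-1)) * c + (1 - 1/p) * m * M = c powr (1/p) * M powr ((p-1)/p)"
    and "(c powr (1/p) * M powr ((p-1)/p)) powr p = c * M powr (p - 1)"
proof -
  define X where "X = c powr (1/p) * M powr ((p-1)/p)"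
  have mp: "m powr (p-1) = c powr ((p-1)/p) / M powr ((p-1)/p)"
    using c M p by (simp add: m_def powr_powr powr_divide)
  have cc: "c = c powr (1/p) * c powr ((p-1)/p)"
    using c p by (simp add: powr_add[symmetric] add_divide_distrib[symmetric])
  have MM: "M = M powr (1/p) * M powr ((p-1)/p)"
    using M p by (simp add: powr_add[symmetric] add_divide_distrib[symmetric])
  have A: "c / m powr (p-1) = X"
    unfolding mp X_def using c M by (subst (1) cc) (simp add: field_simps)
  have B: "m * M = X"
    unfolding X_def m_def using c M by (subst (2) MM) (simp add: powr_divide field_simps)
  have "1/(p * m powr (p-1)) * c + (1 - 1/p) * m * M = (1/p) * (c / m powr (p-1)) + (1 - 1/p) * (m * M)"
    by (simp add: field_simps)
  also have "\<dots> = X" unfolding A B by (simp add: field_simps)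
  finally show "1/(p * m powr (p-1)) * c + (1 - 1/p) * m * M = c powr (1/p) * M powr ((p-1)/p)"
    by (simp add: X_def)
  show "(c powr (1/p) * M powr ((p-1)/p)) powr p = c * M powr (p - 1)"
    using c M p by (simp add: powr_mult powr_powr)
qed

lemma jensen_pw:
  fixes N :: "'a measure" and W y :: "'a \<Rightarrow> ennreal"
  assumes p: "1 \<le> p" and [measurable]: "W \<in> borel_measurable N" "y \<in> borel_measurable N"
    and Wb: "(\<integral>\<^sup>+x. W x \<partial>N) \<le> ennreal Mw" and Mw: "0 \<le> Mw"
  shows "pw p (\<integral>\<^sup>+x. W x * y x \<partial>N) \<le> ennreal (Mw powr (p-1)) * (\<integral>\<^sup>+x. W x * pw p (y x) \<partial>N)"
proof -
  define C where "C = (\<integral>\<^sup>+x. W x * pw p (y x) \<partial>N)"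
  have key: "(\<integral>\<^sup>+x. W x * y x \<partial>N) \<le> ennreal (1/(p * m powr (p-1))) * C + ennreal ((1 - 1/p) * m) * ennreal Mw"
    if m: "0 < m" for m
  proof -
    have "(\<integral>\<^sup>+x. W x * y x \<partial>N) \<le> (\<integral>\<^sup>+x. ennreal (1/(p * m powr (p-1))) * (W x * pw p (y x)) + ennreal ((1 - 1/p) * m) * W x \<partial>N)"
    proof (rule nn_integral_mono)
      fix x
      have "W x * y x \<le> W x * (ennreal (1/(p * m powr (p-1))) * pw p (y x) + ennreal ((1 - 1/p) * m))"
        by (rule mult_left_mono[OF young_enn[OF p m]]) simp
      then show "W x * y x \<le> ennreal (1/(p * m powr (p-1))) * (W x * pw p (y x)) + ennreal ((1 - 1/p) * m) * W x"
        by (simp add: distrib_left ac_simps)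
    qed
    also have "\<dots> = ennreal (1/(p * m powr (p-1))) * C + ennreal ((1 - 1/p) * m) * (\<integral>\<^sup>+x. W x \<partial>N)"
      by (simp add: nn_integral_add nn_integral_cmult C_def)
    also have "\<dots> \<le> ennreal (1/(p * m powr (p-1))) * C + ennreal ((1 - 1/p) * m) * ennreal Mw"
      using Wb by (intro add_mono mult_left_mono) auto
    finally show ?thesis .
  qed
  show ?thesis
  proof (cases "Mw = 0")
    case True
    then have "(\<integral>\<^sup>+x. W x \<partial>N) = 0" using Wb by simp
    then have "AE x in N. W x = 0" by (simp add: nn_integral_0_iff_AE)
    then have "AE x in N. W x * y x = 0" by (auto elim: AE_mp)
    then have "(\<integral>\<^sup>+x. W x * y x \<partial>N) = 0" by (simp add: nn_integral_0_iff_AE)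
    then show ?thesis by simp
  next
    case False then have Mw0: "0 < Mw" using Mw by simp
    show ?thesis
    proof (cases "C = top")
      case True then show ?thesis using Mw0 by (simp add: C_def[symmetric] ennreal_mult_top)
    next
      case False
      define c where "c = enn2real C"
      have c: "C = ennreal c" "0 \<le> c" using False by (auto simp: c_def less_top)
      show ?thesis
      proof (cases "p = 1")
        case True then show ?thesis using Mw0 by simp
      next
        case False then have p1: "1 < p" using p by simp
        show ?thesis
        proof (cases "c = 0")
          case True
          have "(\<integral>\<^sup>+x. W x * y x \<partial>N) \<le> 0 + ennreal e" if e: "0 < e" for e
          proof -
            define m where "m = e / ((1 - 1/p) * Mw)"
            have q: "0 < 1 - 1/p" using p1 by (simp add: field_simps)
            have m: "0 < m" using e q Mw0 by (simp add: m_def)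
            have "(\<integral>\<^sup>+x. W x * y x \<partial>N) \<le> ennreal (1/(p * m powr (p-1))) * C + ennreal ((1 - 1/p) * m) * ennreal Mw"
              by (rule key[OF m])
            also have "\<dots> = ennreal ((1 - 1/p) * m * Mw)"
              using c True q m Mw0 by (simp add: ennreal_mult[symmetric])
            also have "(1 - 1/p) * m * Mw = e"
            proof -
              have "\<And>a. 0 < a \<Longrightarrow> a * (e / (a * Mw)) * Mw = e" using Mw0 by simp
              from this[OF q] show ?thesis by (simp only: m_def)
            qed
            finally show ?thesis by simp
          qed
          then have "(\<integral>\<^sup>+x. W x * y x \<partial>N) \<le> 0" by (rule ennreal_le_epsilon)
          then show ?thesis by simp
        next
          case False then have c0: "0 < c" using c by simp
          define m where "m = (c / Mw) powr (1/p)"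
          have m: "0 < m" using c0 Mw0 by (simp add: m_def)
          define X where "X = c powr (1/p) * Mw powr ((p-1)/p)"
          have "(\<integral>\<^sup>+x. W x * y x \<partial>N) \<le> ennreal (1/(p * m powr (p-1))) * C + ennreal ((1 - 1/p) * m) * ennreal Mw"
            by (rule key[OF m])
          also have "\<dots> = ennreal (1/(p * m powr (p-1)) * c + (1 - 1/p) * m * Mw)"
            using c p1 m Mw0 by (simp add: ennreal_mult[symmetric] ennreal_plus[symmetric] del: ennreal_plus)
          also have "\<dots> = ennreal X"
            using alg_jensen(1)[OF c0 Mw0 p1] by (simp add: m_def X_def)
          finally have "pw p (\<integral>\<^sup>+x. W x * y x \<partial>N) \<le> pw p (ennreal X)"
            by (rule pw_mono[rotated]) (use p in simp)
          also have "\<dots> = ennreal (X powr p)" by (simp add: X_def)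
          also have "X powr p = c * Mw powr (p-1)"
            unfolding X_def by (rule alg_jensen(2)[OF c0 Mw0 p1])
          finally show ?thesis using c by (simp add: C_def[symmetric] ennreal_mult mult.commute)
        qed
      qed
    qed
  qed
qed



lemma convex_pow_real:
  fixes p u v t :: real
  assumes p: "1 \<le> p" and u: "0 \<le> u" and v: "0 \<le> v" and t: "0 \<le> t" "t \<le> 1"
  shows "((1 - t) * u + t * v) powr p \<le> (1 - t) * u powr p + t * v powr p"
proof -
  have le1: "s powr p \<le> s" if "0 \<le> s" "s \<le> 1" for s :: real
    using powr_mono'[of 1 p s] that p by simp
  show ?thesis
  proof (cases "u = 0")
    case True
    have "(t * v) powr p = t powr p * v powr p" using t v by (simp add: powr_mult)
    also have "\<dots> \<le> t * v powr p" using le1[of t] t by (intro mult_right_mono) auto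
    finally show ?thesis using True by simp
  next
    case u0: False
    show ?thesis
    proof (cases "v = 0")
      case True
      have "((1 - t) * u) powr p = (1 - t) powr p * u powr p" using t u by (simp add: powr_mult)
      also have "\<dots> \<le> (1 - t) * u powr p" using le1[of "1 - t"] t by (intro mult_right_mono) auto
      finally show ?thesis using True by simp
    next
      case False
      have "u \<in> {0<..}" "v \<in> {0<..}" using u v u0 False by auto
      from convex_onD[OF powr_convex[OF p] t this] show ?thesis by simp
    qed
  qed
qed

lemma ennreal_lin2:
  fixes a b x y :: real
  assumes "0 \<le> a" "0 \<le> b" "0 \<le> x" "0 \<le> y"
  shows "ennreal (a * x + b * y) = ennreal a * ennreal x + ennreal b * ennreal y"
  using assms by (simp add: ennreal_mult)

lemma powr_split1: fixes S p :: real assumes "0 < S" shows "S powr p = S * S powr (p - 1)"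
proof -
  have "S powr p = S powr (1 + (p - 1))" by simp
  also have "\<dots> = S powr 1 * S powr (p - 1)" by (rule powr_add)
  finally show ?thesis using assms by simp
qed

lemma powr_term_alg:
  fixes S X x p :: real
  assumes p: "1 \<le> p" and S: "0 < S" and X: "0 < X" and x: "0 \<le> x"
  shows "S powr p * ((X / S) * (x / X) powr p) = S powr (p-1) / X powr (p-1) * x powr p"
proof -
  have XX: "(x / X) powr p = x powr p / (X * X powr (p - 1))"
    using X x by (simp add: powr_divide powr_split1[OF X, of p])
  have F: "S * S1 * ((X / S) * (y / (X * X1))) = S1 / X1 * y" for S1 X1 y :: real
    using S X by (simp add: field_simps)
  show ?thesis unfolding powr_split1[OF S, of p] XX by (rule F)
qed

lemma minkowski_real_pt:
  fixes p a b A B :: real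
  assumes p: "1 \<le> p" and a: "0 \<le> a" and b: "0 \<le> b" and A: "0 < A" and B: "0 < B"
  shows "(a + b) powr p \<le> (A+B) powr (p-1) / A powr (p-1) * a powr p + (A+B) powr (p-1) / B powr (p-1) * b powr p"
proof -
  define t where "t = B / (A + B)"
  have t: "0 \<le> t" "t \<le> 1" using A B by (auto simp: t_def)
  have 1: "1 - t = A / (A + B)" using A B by (simp add: t_def field_simps)
  have eq: "a + b = (A + B) * ((1 - t) * (a / A) + t * (b / B))"
  proof -
    have e1: "(1 - t) * (a / A) = a / (A + B)" unfolding 1 using A B by simp
    have e2: "t * (b / B) = b / (A + B)" unfolding t_def using A B by simp
    show ?thesis unfolding e1 e2 using A B by (simp add: add_divide_distrib[symmetric])
  qed
  have "(a + b) powr p = (A + B) powr p * ((1 - t) * (a / A) + t * (b / B)) powr p"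
    unfolding eq using A B a b t by (subst powr_mult) (auto intro!: add_nonneg_nonneg mult_nonneg_nonneg)
  also have "\<dots> \<le> (A + B) powr p * ((1 - t) * (a / A) powr p + t * (b / B) powr p)"
  proof -
    have ab: "0 \<le> a / A" "0 \<le> b / B" using A B a b by auto
    show ?thesis by (rule mult_left_mono[OF convex_pow_real[OF p ab t] powr_ge_zero])
  qed
  also have "\<dots> = (A+B) powr (p-1) / A powr (p-1) * a powr p + (A+B) powr (p-1) / B powr (p-1) * b powr p"
  proof -
    note T = powr_term_alg[OF p]
    have "(A + B) powr p * ((1 - t) * (a / A) powr p + t * (b / B) powr p)
        = (A + B) powr p * ((A / (A + B)) * (a / A) powr p) + (A + B) powr p * ((B / (A + B)) * (b / B) powr p)"
      unfolding 1 by (simp add: t_def distrib_left)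
    also have "\<dots> = (A+B) powr (p-1) / A powr (p-1) * a powr p + (A+B) powr (p-1) / B powr (p-1) * b powr p"
      using T[of "A+B" A a] T[of "A+B" B b] A B a b by simp
    finally show ?thesis .
  qed
  finally show ?thesis .
qed

lemma minkowski_pt:
  fixes p A B :: real and a b :: ennreal
  assumes p: "1 \<le> p" and A: "0 < A" and B: "0 < B"
  shows "pw p (a + b) \<le> ennreal ((A+B) powr (p-1) / A powr (p-1)) * pw p a + ennreal ((A+B) powr (p-1) / B powr (p-1)) * pw p b"
proof (cases "a = top \<or> b = top")
  case True
  have "ennreal ((A+B) powr (p-1) / A powr (p-1)) \<noteq> 0" "ennreal ((A+B) powr (p-1) / B powr (p-1)) \<noteq> 0"
    using A B by auto
  then show ?thesis using True by (auto simp: ennreal_mult_top)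
next
  case False
  define x where "x = enn2real a"
  define y where "y = enn2real b"
  have xy: "a = ennreal x" "b = ennreal y" "0 \<le> x" "0 \<le> y" using False by (auto simp: x_def y_def less_top)
  have "pw p (a + b) = ennreal ((x + y) powr p)" using xy by (simp flip: ennreal_plus)
  also have "\<dots> \<le> ennreal ((A+B) powr (p-1) / A powr (p-1) * x powr p + (A+B) powr (p-1) / B powr (p-1) * y powr p)"
    by (rule ennreal_leI, rule minkowski_real_pt) (use p A B xy in auto)
  also have "\<dots> = ennreal ((A+B) powr (p-1) / A powr (p-1)) * pw p a + ennreal ((A+B) powr (p-1) / B powr (p-1)) * pw p b"
    using xy A B by (subst ennreal_lin2) auto
  finally show ?thesis .
qed

lemma minkowski_pw:
  fixes F G :: "'a \<Rightarrow> ennreal"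
  assumes p: "1 \<le> p" and [measurable]: "F \<in> borel_measurable M" "G \<in> borel_measurable M"
    and A: "0 \<le> A" and B: "0 \<le> B"
    and hF: "(\<integral>\<^sup>+x. pw p (F x) \<partial>M) \<le> ennreal (A powr p)"
    and hG: "(\<integral>\<^sup>+x. pw p (G x) \<partial>M) \<le> ennreal (B powr p)"
  shows "(\<integral>\<^sup>+x. pw p (F x + G x) \<partial>M) \<le> ennreal ((A + B) powr p)"
proof (cases "A = 0 \<or> B = 0")
  case True
  have p0: "0 < p" using p by simp
  show ?thesis
  proof (cases "A = 0")
    case A0: True
    then have "(\<integral>\<^sup>+x. pw p (F x) \<partial>M) = 0" using hF by simp
    then have "AE x in M. pw p (F x) = 0" by (simp add: nn_integral_0_iff_AE)
    then have "AE x in M. F x = 0" using pw_eq_0_iff[OF p0] by simp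
    then have "(\<integral>\<^sup>+x. pw p (F x + G x) \<partial>M) = (\<integral>\<^sup>+x. pw p (G x) \<partial>M)"
      by (intro nn_integral_cong_AE) auto
    then show ?thesis using hG A0 by simp
  next
    case A0: False
    then have B0: "B = 0" using True by simp
    then have "(\<integral>\<^sup>+x. pw p (G x) \<partial>M) = 0" using hG by simp
    then have "AE x in M. pw p (G x) = 0" by (simp add: nn_integral_0_iff_AE)
    then have "AE x in M. G x = 0" using pw_eq_0_iff[OF p0] by simp
    then have "(\<integral>\<^sup>+x. pw p (F x + G x) \<partial>M) = (\<integral>\<^sup>+x. pw p (F x) \<partial>M)"
      by (intro nn_integral_cong_AE) auto
    then show ?thesis using hF B0 by simp
  qed
next
  case False
  then have A0: "0 < A" and B0: "0 < B" using A B by auto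
  define \<alpha> where "\<alpha> = (A+B) powr (p-1) / A powr (p-1)"
  define \<beta> where "\<beta> = (A+B) powr (p-1) / B powr (p-1)"
  have "(\<integral>\<^sup>+x. pw p (F x + G x) \<partial>M) \<le> (\<integral>\<^sup>+x. ennreal \<alpha> * pw p (F x) + ennreal \<beta> * pw p (G x) \<partial>M)"
    by (rule nn_integral_mono) (unfold \<alpha>_def \<beta>_def, rule minkowski_pt[OF p A0 B0])
  also have "\<dots> = ennreal \<alpha> * (\<integral>\<^sup>+x. pw p (F x) \<partial>M) + ennreal \<beta> * (\<integral>\<^sup>+x. pw p (G x) \<partial>M)"
    by (simp add: nn_integral_add nn_integral_cmult)
  also have "\<dots> \<le> ennreal \<alpha> * ennreal (A powr p) + ennreal \<beta> * ennreal (B powr p)"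
    using hF hG by (intro add_mono mult_left_mono) auto
  also have "\<dots> = ennreal (\<alpha> * A powr p + \<beta> * B powr p)"
  proof -
    have "0 \<le> \<alpha>" "0 \<le> \<beta>" by (simp_all add: \<alpha>_def \<beta>_def)
    then show ?thesis by (intro ennreal_lin2[symmetric]) auto
  qed
  also have "\<alpha> * A powr p + \<beta> * B powr p = (A + B) powr p"
  proof -
    have AB: "(A + B) powr p = (A + B) * (A + B) powr (p - 1)" using A0 B0 by (intro powr_split1) simp
    have Ap: "A powr p = A * A powr (p - 1)" using A0 by (rule powr_split1)
    have Bp: "B powr p = B * B powr (p - 1)" using B0 by (rule powr_split1)
    have F: "S1 / X1 * (X * X1) + S1 / Y1 * (Y * Y1) = (X + Y) * S1" if "X1 > 0" "Y1 > 0" for S1 X1 Y1 X Y :: real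
      using that by (simp add: field_simps)
    show ?thesis unfolding \<alpha>_def \<beta>_def AB Ap Bp using A0 B0 by (intro F) auto
  qed
  finally show ?thesis .
qed



lemma nn_integral_trans:
  fixes g :: "real \<Rightarrow> ennreal"
  assumes [measurable]: "g \<in> borel_measurable borel"
  shows "(\<integral>\<^sup>+x. g (x + h) \<partial>lborel) = (\<integral>\<^sup>+x. g x \<partial>lborel)"
  using nn_integral_real_affine[of g 1 h] by (simp add: add.commute)

lemma norm_integral_le_nn:
  fixes g :: "'a \<Rightarrow> real"
  shows "ennreal \<bar>integral\<^sup>L M g\<bar> \<le> (\<integral>\<^sup>+x. ennreal \<bar>g x\<bar> \<partial>M)"
proof (cases "integrable M g")
  case True
  from integral_norm_bound_ennreal[OF True] show ?thesis by simp
next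
  case False
  then show ?thesis by (simp add: not_integrable_integral_eq)
qed

locale lpf =
  fixes p :: real and f :: "real \<Rightarrow> real"
  assumes p: "1 \<le> p" and fLp: "in_Lp p f"
begin

lemma p0: "0 < p" using p by simp

lemma fmeas[measurable]: "f \<in> borel_measurable borel"
  using fLp by (simp add: in_Lp_def)

definition If where "If = (\<integral>\<^sup>+x. ennreal (\<bar>f x\<bar> powr p) \<partial>lborel)"
definition nf where "nf = enn2real If powr (1/p)"
definition D where "D h = (\<integral>\<^sup>+x. ennreal (\<bar>f (x + h) - f x\<bar> powr p) \<partial>lborel)"

lemma If_fin: "If < top" using fLp by (simp add: in_Lp_def If_def)

lemma nf_nonneg: "0 \<le> nf" by (simp add: nf_def)

lemma If_eq: "If = ennreal (nf powr p)"
proof -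
  have "nf powr p = enn2real If" using p0 by (simp add: nf_def powr_powr)
  then show ?thesis using If_fin by (simp add: less_top)
qed

lemma Lp_norm_f: "Lp_norm p f = ereal nf"
  using If_fin by (simp add: Lp_norm_def If_def[symmetric] nf_def Let_def)

lemma Lp_norm_D: "Lp_norm p (\<lambda>x. f (x + h) - f x) = (if D h = top then \<infinity> else ereal (enn2real (D h) powr (1/p)))"
  by (simp add: Lp_norm_def D_def Let_def)

lemma pw_abs: "pw p (ennreal \<bar>r\<bar>) = ennreal (\<bar>r\<bar> powr p)" by simp

lemma int_shift: "(\<integral>\<^sup>+x. ennreal (\<bar>f (x + h)\<bar> powr p) \<partial>lborel) = If"
  unfolding If_def by (rule nn_integral_trans) measurable

lemma int_pw_shift: "(\<integral>\<^sup>+x. pw p (ennreal \<bar>f (x + h)\<bar>) \<partial>lborel) = If"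
  unfolding If_def pw_abs by (rule nn_integral_trans) measurable

lemma D_bound: "D h \<le> ennreal ((nf + nf) powr p)"
proof -
  have "D h \<le> (\<integral>\<^sup>+x. pw p (ennreal \<bar>f (x + h)\<bar> + ennreal \<bar>f x\<bar>) \<partial>lborel)"
    unfolding D_def
  proof (rule nn_integral_mono)
    fix x
    have "ennreal (\<bar>f (x + h) - f x\<bar> powr p) = pw p (ennreal \<bar>f (x + h) - f x\<bar>)" by simp
    also have "\<dots> \<le> pw p (ennreal \<bar>f (x + h)\<bar> + ennreal \<bar>f x\<bar>)"
      by (rule pw_mono[OF p0]) (simp flip: ennreal_plus add: ennreal_leI)
    finally show "ennreal (\<bar>f (x + h) - f x\<bar> powr p) \<le> pw p (ennreal \<bar>f (x + h)\<bar> + ennreal \<bar>f x\<bar>)" .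
  qed
  also have "\<dots> \<le> ennreal ((nf + nf) powr p)"
    by (rule minkowski_pw[OF p]) (simp_all add: int_shift nf_nonneg If_eq[symmetric] If_def)
  finally show ?thesis .
qed

lemma D_fin: "D h < top"
  by (rule le_less_trans[OF D_bound]) simp

definition om where "om d = real_of_ereal (omega_p p f d)"

lemma omega_props:
  assumes d: "0 \<le> d"
  shows "omega_p p f d = ereal (om d)" "0 \<le> om d" "om d \<le> nf + nf"
    and "\<And>h. \<bar>h\<bar> \<le> d \<Longrightarrow> D h \<le> ennreal (om d powr p)"
proof -
  have LD: "Lp_norm p (\<lambda>x. f (x + h) - f x) = ereal (enn2real (D h) powr (1/p))" for h
    using D_fin[of h] by (simp add: Lp_norm_D)
  have LDb: "enn2real (D h) powr (1/p) \<le> nf + nf" for h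
  proof -
    have "enn2real (D h) \<le> (nf + nf) powr p"
      using D_bound[of h] by (simp add: enn2real_leI)
    then have "enn2real (D h) powr (1/p) \<le> ((nf + nf) powr p) powr (1/p)"
      using p0 by (intro powr_mono2) auto
    also have "\<dots> = nf + nf" using p0 nf_nonneg by (simp add: powr_powr)
    finally show ?thesis .
  qed
  have S: "omega_p p f d = (SUP h\<in>{h. \<bar>h\<bar> \<le> d}. ereal (enn2real (D h) powr (1/p)))"
    unfolding omega_p_def LD ..
  have ub: "omega_p p f d \<le> ereal (nf + nf)"
    unfolding S by (rule SUP_least) (use LDb in auto)
  have lb: "ereal (enn2real (D 0) powr (1/p)) \<le> omega_p p f d"
    unfolding S by (rule SUP_upper) (use d in auto)
  then have lb0: "0 \<le> omega_p p f d" by (rule order_trans[rotated]) simp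
  have fin: "\<bar>omega_p p f d\<bar> \<noteq> \<infinity>" using ub lb0 by auto
  show eq: "omega_p p f d = ereal (om d)" using fin unfolding om_def by (rule ereal_real' [symmetric])
  show "0 \<le> om d" using lb0 eq by simp
  show "om d \<le> nf + nf" using ub eq by simp
  fix h assume h: "\<bar>h\<bar> \<le> d"
  have "ereal (enn2real (D h) powr (1/p)) \<le> omega_p p f d"
    unfolding S by (rule SUP_upper) (use h in auto)
  then have le: "enn2real (D h) powr (1/p) \<le> om d" using eq by simp
  have "enn2real (D h) = (enn2real (D h) powr (1/p)) powr p" using p0 by (simp add: powr_powr)
  also have "\<dots> \<le> om d powr p" using le p0 by (intro powr_mono2) auto
  finally have "enn2real (D h) \<le> om d powr p" .
  then have "ennreal (enn2real (D h)) \<le> ennreal (om d powr p)" by (rule ennreal_leI)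
  then show "D h \<le> ennreal (om d powr p)"
    using D_fin[of h] by (simp add: less_top)
qed

end


lemma pow_one_plus:
  fixes y p :: real assumes p: "1 \<le> p" and y: "0 \<le> y"
  shows "(1 + y) powr p \<le> 2 powr (p - 1) * (1 + y powr p)"
proof -
  have "((1 - 1/2) * 1 + (1/2) * y) powr p \<le> (1 - 1/2) * 1 powr p + (1/2) * y powr p"
    by (rule convex_pow_real[OF p]) (use y in auto)
  then have c: "((1 + y) / 2) powr p \<le> (1 + y powr p) / 2" by (simp add: add_divide_distrib)
  have "(1 + y) powr p = 2 powr p * ((1 + y) / 2) powr p"
    using y by (simp add: powr_divide)
  also have "\<dots> \<le> 2 powr p * ((1 + y powr p) / 2)" by (rule mult_left_mono[OF c]) simp
  also have "\<dots> = 2 powr (p - 1) * (1 + y powr p)"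
    using powr_split1[of 2 p] by simp
  finally show ?thesis .
qed

context lpf begin

lemma D_0: "D 0 = 0" by (simp add: D_def)

lemma D_shift: "(\<integral>\<^sup>+x. ennreal (\<bar>f (x + h2 + h1) - f (x + h2)\<bar> powr p) \<partial>lborel) = D h1"
  unfolding D_def using nn_integral_trans[of "\<lambda>y. ennreal (\<bar>f (y + h1) - f y\<bar> powr p)" h2]
  by (simp add: add.assoc)

lemma D_mult:
  assumes d: "0 \<le> d"
  shows "\<bar>h\<bar> \<le> real n * d \<Longrightarrow> D h \<le> ennreal ((real n * om d) powr p)"
proof (induction n arbitrary: h)
  case 0
  then have "h = 0" by simp
  then show ?case by (simp add: D_0)
next
  case (Suc n)
  define h2 where "h2 = max (-d) (min d h)"
  define h1 where "h1 = h - h2"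
  have h2: "\<bar>h2\<bar> \<le> d" using d by (auto simp: h2_def)
  have h1: "\<bar>h1\<bar> \<le> real n * d"
  proof -
    have "\<bar>h\<bar> \<le> real n * d + d" using Suc.prems by (simp add: algebra_simps)
    moreover have "0 \<le> real n * d" using d by simp
    ultimately show ?thesis using d unfolding h1_def h2_def by (simp add: abs_le_iff max_def min_def)
  qed
  have "D h \<le> (\<integral>\<^sup>+x. pw p (ennreal \<bar>f (x + h2 + h1) - f (x + h2)\<bar> + ennreal \<bar>f (x + h2) - f x\<bar>) \<partial>lborel)"
    unfolding D_def
  proof (rule nn_integral_mono)
    fix x
    have xh: "x + h = x + h2 + h1" by (simp add: h1_def)
    have "ennreal (\<bar>f (x + h) - f x\<bar> powr p) = pw p (ennreal \<bar>f (x + h2 + h1) - f (x + h2) + (f (x + h2) - f x)\<bar>)"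
      unfolding xh by simp
    also have "\<dots> \<le> pw p (ennreal \<bar>f (x + h2 + h1) - f (x + h2)\<bar> + ennreal \<bar>f (x + h2) - f x\<bar>)"
      by (rule pw_mono[OF p0]) (simp flip: ennreal_plus add: ennreal_leI)
    finally show "ennreal (\<bar>f (x + h) - f x\<bar> powr p) \<le> pw p (ennreal \<bar>f (x + h2 + h1) - f (x + h2)\<bar> + ennreal \<bar>f (x + h2) - f x\<bar>)" .
  qed
  also have "\<dots> \<le> ennreal ((real n * om d + om d) powr p)"
  proof (rule minkowski_pw[OF p])
    show "(\<integral>\<^sup>+x. pw p (ennreal \<bar>f (x + h2 + h1) - f (x + h2)\<bar>) \<partial>lborel) \<le> ennreal ((real n * om d) powr p)"
      using Suc.IH[OF h1] by (simp add: D_shift)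
    show "(\<integral>\<^sup>+x. pw p (ennreal \<bar>f (x + h2) - f x\<bar>) \<partial>lborel) \<le> ennreal (om d powr p)"
      using omega_props(4)[OF d h2] by (simp add: D_def)
  qed (use omega_props(2)[OF d] in auto)
  also have "real n * om d + om d = real (Suc n) * om d" by (simp add: algebra_simps)
  finally show ?case .
qed

lemma D_lin:
  assumes w: "0 < w"
  shows "D (y / w) \<le> ennreal (((1 + \<bar>y\<bar>) * om (1/w)) powr p)"
proof -
  define n where "n = nat \<lceil>\<bar>y\<bar>\<rceil>"
  have n1: "\<bar>y\<bar> \<le> real n" by (simp add: n_def)
  have n2: "real n \<le> 1 + \<bar>y\<bar>" by (simp add: n_def) linarith
  have d: "0 \<le> 1/w" using w by simp
  have "\<bar>y / w\<bar> \<le> real n * (1/w)" using n1 w by (simp add: divide_right_mono)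
  then have "D (y / w) \<le> ennreal ((real n * om (1/w)) powr p)" by (rule D_mult[OF d])
  also have "\<dots> \<le> ennreal (((1 + \<bar>y\<bar>) * om (1/w)) powr p)"
    using omega_props(2)[OF d] n2 p0
    by (intro ennreal_leI powr_mono2 mult_right_mono) auto
  finally show ?thesis .
qed

end


context lpf begin

lemma abs_le_pw: "ennreal \<bar>r\<bar> \<le> 1 + ennreal (\<bar>r\<bar> powr p)"
proof (cases "\<bar>r\<bar> \<le> 1")
  case True then show ?thesis
    by (metis add_increasing2 ennreal_1 ennreal_leI zero_le)
next
  case False
  then have "\<bar>r\<bar> = \<bar>r\<bar> powr 1" by simp
  also have "\<dots> \<le> \<bar>r\<bar> powr p" using False p by (intro powr_mono) auto
  finally have "ennreal \<bar>r\<bar> \<le> ennreal (\<bar>r\<bar> powr p)" by (rule ennreal_leI)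
  then show ?thesis by (simp add: add_increasing)
qed

lemma int_abs_f_Icc:
  assumes ab: "a \<le> b"
  shows "(\<integral>\<^sup>+u. indicator {a..b} u * ennreal \<bar>f u\<bar> \<partial>lborel) \<le> ennreal (b - a) + If"
proof -
  have "(\<integral>\<^sup>+u. indicator {a..b} u * ennreal \<bar>f u\<bar> \<partial>lborel)
      \<le> (\<integral>\<^sup>+u. indicator {a..b} u + ennreal (\<bar>f u\<bar> powr p) \<partial>lborel)"
  proof (rule nn_integral_mono)
    fix u
    show "indicator {a..b} u * ennreal \<bar>f u\<bar> \<le> indicator {a..b} u + ennreal (\<bar>f u\<bar> powr p)"
    proof (cases "u \<in> {a..b}")
      case True then show ?thesis using abs_le_pw[of "f u"] by simp
    qed simp
  qed
  also have "\<dots> = ennreal (b - a) + If"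
    using ab by (simp add: nn_integral_add If_def)
  finally show ?thesis .
qed

lemma set_integrable_f_Icc:
  assumes ab: "a \<le> b"
  shows "set_integrable lborel {a..b} f"
  unfolding set_integrable_def
proof (rule integrableI_bounded)
  show "(\<lambda>x. indicator {a..b} x *\<^sub>R f x) \<in> borel_measurable lborel" by measurable
  have "(\<integral>\<^sup>+x. ennreal (norm (indicator {a..b} x *\<^sub>R f x)) \<partial>lborel) = (\<integral>\<^sup>+u. indicator {a..b} u * ennreal \<bar>f u\<bar> \<partial>lborel)"
    by (intro nn_integral_cong) (auto simp: indicator_def)
  also have "\<dots> < top"
  proof (rule le_less_trans[OF int_abs_f_Icc[OF ab]])
    show "ennreal (b - a) + If < top" using If_fin by (simp add: less_top[symmetric] ennreal_add_eq_top)
  qed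
  finally show "(\<integral>\<^sup>+x. ennreal (norm (indicator {a..b} x *\<^sub>R f x)) \<partial>lborel) < \<infinity>" by simp
qed

lemma avg_abs_bound:
  assumes l: "0 < l"
  shows "ennreal \<bar>(1/l) * (LINT u:{a..a+l}|lborel. f u)\<bar> \<le> ennreal (1 + enn2real If / l)"
proof -
  have "ennreal \<bar>(LINT u:{a..a+l}|lborel. f u)\<bar> \<le> (\<integral>\<^sup>+u. ennreal \<bar>indicator {a..a+l} u *\<^sub>R f u\<bar> \<partial>lborel)"
    unfolding set_lebesgue_integral_def by (rule norm_integral_le_nn)
  also have "\<dots> = (\<integral>\<^sup>+u. indicator {a..a+l} u * ennreal \<bar>f u\<bar> \<partial>lborel)"
    by (intro nn_integral_cong) (auto simp: indicator_def)
  also have "\<dots> \<le> ennreal l + If" using int_abs_f_Icc[of a "a+l"] l by simp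
  also have "\<dots> = ennreal (l + enn2real If)"
  proof -
    have e: "ennreal (enn2real If) = If" using If_fin by (intro ennreal_enn2real) simp
    show ?thesis by (subst ennreal_plus) (use l e in auto)
  qed
  finally have "\<bar>(LINT u:{a..a+l}|lborel. f u)\<bar> \<le> l + enn2real If"
    by (subst (asm) ennreal_le_iff) (use l in \<open>auto intro!: add_nonneg_nonneg\<close>)
  then have "\<bar>(1/l) * (LINT u:{a..a+l}|lborel. f u)\<bar> \<le> (1/l) * (l + enn2real If)"
    using l by (simp add: abs_mult divide_right_mono)
  also have "\<dots> = 1 + enn2real If / l" using l by (simp add: field_simps)
  finally show ?thesis by (rule ennreal_leI)
qed

lemma avg_diff:
  assumes l: "0 < l"
  shows "ennreal \<bar>(1/l) * (LINT u:{a..a+l}|lborel. f u) - y\<bar>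
     \<le> (\<integral>\<^sup>+s. (ennreal (1/l) * indicator {0..<l} s) * ennreal \<bar>f (a + s) - y\<bar> \<partial>lborel)"
proof -
  have fi: "set_integrable lborel {a..a+l} f" using l by (intro set_integrable_f_Icc) simp
  have ci: "set_integrable lborel {a..a+l} (\<lambda>_. y)"
    unfolding set_integrable_def using l by (intro integrable_indicator) auto
  have cint: "(LINT u:{a..a+l}|lborel. y) = l * y"
    using l by (subst set_integral_const) auto
  have eq: "(1/l) * (LINT u:{a..a+l}|lborel. f u) - y = (1/l) * (LINT u:{a..a+l}|lborel. f u - y)"
    using l by (simp add: set_integral_diff(2)[OF fi ci] cint field_simps)
  have "ennreal \<bar>(LINT u:{a..a+l}|lborel. f u - y)\<bar> \<le> (\<integral>\<^sup>+u. ennreal \<bar>indicator {a..a+l} u *\<^sub>R (f u - y)\<bar> \<partial>lborel)"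
    unfolding set_lebesgue_integral_def by (rule norm_integral_le_nn)
  also have "\<dots> = (\<integral>\<^sup>+u. indicator {a..a+l} u * ennreal \<bar>f u - y\<bar> \<partial>lborel)"
    by (intro nn_integral_cong) (auto simp: indicator_def)
  also have "\<dots> = (\<integral>\<^sup>+s. indicator {a..a+l} (s + a) * ennreal \<bar>f (s + a) - y\<bar> \<partial>lborel)"
    by (rule nn_integral_trans[symmetric]) measurable
  also have "\<dots> = (\<integral>\<^sup>+s. indicator {0..<l} s * ennreal \<bar>f (a + s) - y\<bar> \<partial>lborel)"
  proof (rule nn_integral_cong_AE)
    show "AE s in lborel. indicator {a..a+l} (s + a) * ennreal \<bar>f (s + a) - y\<bar> = indicator {0..<l} s * ennreal \<bar>f (a + s) - y\<bar>"
      using AE_lborel_singleton[of l] by eventually_elim (auto simp: indicator_def add.commute)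
  qed
  finally have I: "ennreal \<bar>(LINT u:{a..a+l}|lborel. f u - y)\<bar> \<le> (\<integral>\<^sup>+s. indicator {0..<l} s * ennreal \<bar>f (a + s) - y\<bar> \<partial>lborel)" .
  have "ennreal \<bar>(1/l) * (LINT u:{a..a+l}|lborel. f u) - y\<bar> = ennreal ((1/l) * \<bar>(LINT u:{a..a+l}|lborel. f u - y)\<bar>)"
    unfolding eq using l by (simp add: abs_mult)
  also have "\<dots> = ennreal (1/l) * ennreal \<bar>(LINT u:{a..a+l}|lborel. f u - y)\<bar>"
    by (rule ennreal_mult) (use l in auto)
  also have "\<dots> \<le> ennreal (1/l) * (\<integral>\<^sup>+s. indicator {0..<l} s * ennreal \<bar>f (a + s) - y\<bar> \<partial>lborel)"
    by (rule mult_left_mono[OF I]) simp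
  also have "\<dots> = (\<integral>\<^sup>+s. (ennreal (1/l) * indicator {0..<l} s) * ennreal \<bar>f (a + s) - y\<bar> \<partial>lborel)"
    by (subst nn_integral_cmult[symmetric]) (auto simp: mult.assoc)
  finally show ?thesis .
qed

end


locale mainctx = lpf p f for p f +
  fixes \<delta> \<Delta> :: real and t :: "int \<Rightarrow> real" and K :: "real \<Rightarrow> real \<Rightarrow> real"
    and L :: "real \<Rightarrow> real" and w :: real
  assumes samp: "sampling_seq t \<delta> \<Delta>" and ker: "kernel_lip K t L"
    and m0fin: "m0_enn L t < \<infinity>" and w: "0 < w"
begin

lemma delta: "0 < \<delta>" "\<delta> \<le> \<Delta>" using samp by (auto simp: sampling_seq_def)
lemma dk: "\<delta> \<le> t (k + 1) - t k" "t (k + 1) - t k \<le> \<Delta>" using samp by (auto simp: sampling_seq_def)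
lemma dk_pos: "0 < t (k + 1) - t k" using dk(1)[of k] delta(1) by linarith

lemma Lmeas[measurable]: "L \<in> borel_measurable borel" using ker by (simp add: kernel_lip_def)
lemma Lnn: "0 \<le> L x" using ker by (simp add: kernel_lip_def)
lemma Lip: "\<bar>K x u - K x v\<bar> \<le> L x * \<bar>u - v\<bar>" using ker by (simp add: kernel_lip_def)
lemma K0: "K x 0 = 0" using ker by (simp add: kernel_lip_def)

abbreviation "m \<equiv> m0 L t"

lemma m0_eq: "m0_enn L t = ennreal m"
  using m0fin by (simp add: m0_def less_top)
lemma m_nonneg: "0 \<le> m" by (simp add: m0_def)

lemma sumL_int: "infsum (\<lambda>k. ennreal (L (u - t k))) UNIV \<le> ennreal m"
  unfolding m0_eq[symmetric] m0_enn_def by (rule SUP_upper) simp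

lemma sumL: "(\<Sum>n. ennreal (L (u - t (int_decode n)))) \<le> ennreal m"
  using sumL_int[of u] by (simp add: infsum_int_ennreal)

lemma sum_bound:
  fixes c :: "int \<Rightarrow> real"
  assumes c: "\<And>k. \<bar>c k\<bar> \<le> L (u - t k) * B" and B: "0 \<le> B"
  shows "infsum (\<lambda>k. ennreal \<bar>c k\<bar>) UNIV < top"
proof -
  have "infsum (\<lambda>k. ennreal \<bar>c k\<bar>) UNIV = (\<Sum>n. ennreal \<bar>c (int_decode n)\<bar>)"
    by (rule infsum_int_ennreal)
  also have "\<dots> \<le> (\<Sum>n. ennreal (L (u - t (int_decode n))) * ennreal B)"
    by (intro suminf_le ennreal_leI) (auto simp: c ennreal_mult[symmetric] B Lnn intro: summableI)
  also have "\<dots> = (\<Sum>n. ennreal (L (u - t (int_decode n)))) * ennreal B" by simp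
  also have "\<dots> \<le> ennreal m * ennreal B" by (intro mult_right_mono sumL) simp
  also have "\<dots> < top" by (simp add: ennreal_mult_less_top)
  finally show ?thesis by simp
qed

definition tk where "tk n = t (int_decode n)"
definition Dk where "Dk n = t (int_decode n + 1) - t (int_decode n)"
definition Wk where "Wk n s = ennreal (w / Dk n) * indicator {0..<Dk n / w} s"

definition E1 where "E1 x = (\<Sum>n. ennreal (L (w * x - tk n)) *
    (\<integral>\<^sup>+s. Wk n s * ennreal \<bar>f (tk n / w + s) - f (x + s)\<bar> \<partial>lborel))"
definition E2 where "E2 x = (\<Sum>n. ennreal (L (w * x - tk n)) *
    (\<integral>\<^sup>+s. Wk n s * ennreal \<bar>f (x + s) - f x\<bar> \<partial>lborel))"

lemma Wk_meas[measurable]: "(\<lambda>s. Wk n s) \<in> borel_measurable borel"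
  unfolding Wk_def by measurable

lemma pointwise:
  assumes Tb: "\<forall>x. Tw K t w x \<le> ereal (M2 * w powr (- \<theta>0))"
  shows "ennreal \<bar>S_op K t w f x - f x\<bar> \<le> E1 x + E2 x + ennreal (M2 * w powr (- \<theta>0) * \<bar>f x\<bar>)"
proof -
  define a where "a k = (w / (t (k + 1) - t k)) * (LINT u:{t k / w..t (k + 1) / w}|lborel. f u)" for k
  define Bf where "Bf = 1 + enn2real If * w / \<delta>"
  have Bf: "0 \<le> Bf" using delta w by (simp add: Bf_def)
  have aform: "a k = (1 / ((t (k+1) - t k) / w)) * (LINT u:{t k / w..t k / w + (t (k+1) - t k) / w}|lborel. f u)" for k
  proof -
    have e1: "t k / w + (t (k+1) - t k) / w = t (k+1) / w" by (simp add: diff_divide_distrib)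
    have e2: "1 / ((t (k+1) - t k) / w) = w / (t (k+1) - t k)" by simp
    show ?thesis unfolding e1 e2 a_def ..
  qed
  have abound: "\<bar>a k\<bar> \<le> Bf" for k
  proof -
    have l: "0 < (t (k+1) - t k) / w" using dk_pos[of k] w by simp
    have "ennreal \<bar>a k\<bar> \<le> ennreal (1 + enn2real If / ((t (k+1) - t k) / w))"
      unfolding aform by (rule avg_abs_bound[OF l])
    moreover have "0 \<le> 1 + enn2real If / ((t (k+1) - t k) / w)" using l by (intro add_nonneg_nonneg divide_nonneg_pos) auto
    ultimately have "\<bar>a k\<bar> \<le> 1 + enn2real If / ((t (k+1) - t k) / w)"
      by (simp add: ennreal_le_iff)
    also have "\<dots> = 1 + enn2real If * w / (t (k+1) - t k)" using w by simp
    also have "\<dots> \<le> Bf" unfolding Bf_def using dk(1)[of k] delta w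
      by (intro add_left_mono divide_left_mono) (auto intro!: mult_nonneg_nonneg)
    finally show ?thesis .
  qed
  have avg: "ennreal \<bar>a k - f x\<bar> \<le> (\<integral>\<^sup>+s. (ennreal (w / (t (k+1) - t k)) * indicator {0..<(t (k+1) - t k) / w} s)
       * ennreal \<bar>f (t k / w + s) - f x\<bar> \<partial>lborel)" for k
  proof -
    have l: "0 < (t (k+1) - t k) / w" using dk_pos[of k] w by simp
    show ?thesis unfolding aform using avg_diff[OF l, of "t k / w" "f x"] by simp
  qed
  define Ka where "Ka k = K (w * x - t k) (a k)" for k
  define Kf where "Kf k = K (w * x - t k) (f x)" for k
  have c1: "\<bar>Ka k - Kf k\<bar> \<le> L (w * x - t k) * (Bf + \<bar>f x\<bar>)" for k
  proof -
    have "\<bar>Ka k - Kf k\<bar> \<le> L (w * x - t k) * \<bar>a k - f x\<bar>" unfolding Ka_def Kf_def by (rule Lip)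
    also have "\<dots> \<le> L (w * x - t k) * (Bf + \<bar>f x\<bar>)"
      using abound[of k] by (intro mult_left_mono Lnn) linarith
    finally show ?thesis .
  qed
  have c2: "\<bar>Kf k\<bar> \<le> L (w * x - t k) * \<bar>f x\<bar>" for k
    using Lip[of "w * x - t k" "f x" 0] by (simp add: Kf_def K0)
  have s1: "(\<lambda>k. Ka k - Kf k) summable_on UNIV"
    by (rule real_infsum_bound(1), rule sum_bound[OF c1]) (use Bf in auto)
  have s2: "Kf summable_on UNIV"
    by (rule real_infsum_bound(1), rule sum_bound[OF c2]) auto
  have Seq: "S_op K t w f x = infsum (\<lambda>k. Ka k - Kf k) UNIV + infsum Kf UNIV"
  proof -
    have "S_op K t w f x = infsum (\<lambda>k. (Ka k - Kf k) + Kf k) UNIV"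
      by (simp add: S_op_def Ka_def a_def)
    also have "\<dots> = infsum (\<lambda>k. Ka k - Kf k) UNIV + infsum Kf UNIV"
      by (rule infsum_add[OF s1 s2])
    finally show ?thesis .
  qed
  have T1: "ennreal \<bar>infsum (\<lambda>k. Ka k - Kf k) UNIV\<bar> \<le> E1 x + E2 x"
  proof -
    have "ennreal \<bar>infsum (\<lambda>k. Ka k - Kf k) UNIV\<bar> \<le> infsum (\<lambda>k. ennreal \<bar>Ka k - Kf k\<bar>) UNIV"
      by (rule real_infsum_bound(2), rule sum_bound[OF c1]) (use Bf in auto)
    also have "\<dots> = (\<Sum>n. ennreal \<bar>Ka (int_decode n) - Kf (int_decode n)\<bar>)"
      by (rule infsum_int_ennreal)
    also have "\<dots> \<le> (\<Sum>n. ennreal (L (w * x - tk n)) *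
        ((\<integral>\<^sup>+s. Wk n s * ennreal \<bar>f (tk n / w + s) - f (x + s)\<bar> \<partial>lborel)
         + (\<integral>\<^sup>+s. Wk n s * ennreal \<bar>f (x + s) - f x\<bar> \<partial>lborel)))"
    proof (intro suminf_le summableI)
      fix n
      define k where "k = int_decode n"
      have "ennreal \<bar>Ka k - Kf k\<bar> \<le> ennreal (L (w * x - t k) * \<bar>a k - f x\<bar>)"
        unfolding Ka_def Kf_def by (rule ennreal_leI, rule Lip)
      also have "\<dots> = ennreal (L (w * x - t k)) * ennreal \<bar>a k - f x\<bar>"
        by (rule ennreal_mult) (auto simp: Lnn)
      also have "\<dots> \<le> ennreal (L (w * x - t k)) * (\<integral>\<^sup>+s. Wk n s * ennreal \<bar>f (tk n / w + s) - f x\<bar> \<partial>lborel)"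
        by (rule mult_left_mono) (use avg[of k] in \<open>simp_all add: Wk_def Dk_def tk_def k_def\<close>)
      also have "\<dots> \<le> ennreal (L (w * x - t k)) *
        ((\<integral>\<^sup>+s. Wk n s * ennreal \<bar>f (tk n / w + s) - f (x + s)\<bar> \<partial>lborel)
         + (\<integral>\<^sup>+s. Wk n s * ennreal \<bar>f (x + s) - f x\<bar> \<partial>lborel))"
      proof (rule mult_left_mono)
        have "(\<integral>\<^sup>+s. Wk n s * ennreal \<bar>f (tk n / w + s) - f x\<bar> \<partial>lborel)
          \<le> (\<integral>\<^sup>+s. Wk n s * ennreal \<bar>f (tk n / w + s) - f (x + s)\<bar> + Wk n s * ennreal \<bar>f (x + s) - f x\<bar> \<partial>lborel)"
        proof (rule nn_integral_mono)
          fix s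
          have "ennreal \<bar>f (tk n / w + s) - f x\<bar> \<le> ennreal \<bar>f (tk n / w + s) - f (x + s)\<bar> + ennreal \<bar>f (x + s) - f x\<bar>"
            by (simp flip: ennreal_plus add: ennreal_leI)
          then show "Wk n s * ennreal \<bar>f (tk n / w + s) - f x\<bar> \<le> Wk n s * ennreal \<bar>f (tk n / w + s) - f (x + s)\<bar> + Wk n s * ennreal \<bar>f (x + s) - f x\<bar>"
            by (metis distrib_left mult_left_mono zero_le)
        qed
        also have "\<dots> = (\<integral>\<^sup>+s. Wk n s * ennreal \<bar>f (tk n / w + s) - f (x + s)\<bar> \<partial>lborel)
         + (\<integral>\<^sup>+s. Wk n s * ennreal \<bar>f (x + s) - f x\<bar> \<partial>lborel)"
          by (rule nn_integral_add) measurable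
        finally show "(\<integral>\<^sup>+s. Wk n s * ennreal \<bar>f (tk n / w + s) - f x\<bar> \<partial>lborel)
          \<le> (\<integral>\<^sup>+s. Wk n s * ennreal \<bar>f (tk n / w + s) - f (x + s)\<bar> \<partial>lborel)
         + (\<integral>\<^sup>+s. Wk n s * ennreal \<bar>f (x + s) - f x\<bar> \<partial>lborel)" .
      qed simp
      finally show "ennreal \<bar>Ka (int_decode n) - Kf (int_decode n)\<bar> \<le> ennreal (L (w * x - tk n)) *
        ((\<integral>\<^sup>+s. Wk n s * ennreal \<bar>f (tk n / w + s) - f (x + s)\<bar> \<partial>lborel)
         + (\<integral>\<^sup>+s. Wk n s * ennreal \<bar>f (x + s) - f x\<bar> \<partial>lborel))"
        by (simp add: k_def tk_def)
    qed
    also have "\<dots> = E1 x + E2 x"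
      unfolding E1_def E2_def distrib_left by (rule suminf_add[symmetric]) (auto intro: summableI)
    finally show ?thesis .
  qed
  have T2: "\<bar>infsum Kf UNIV - f x\<bar> \<le> M2 * w powr (- \<theta>0) * \<bar>f x\<bar>"
  proof (cases "f x = 0")
    case True
    then have "Kf = (\<lambda>k. 0)" by (auto simp: Kf_def K0)
    then show ?thesis using True by simp
  next
    case False
    have "ereal \<bar>(1 / f x) * infsum (\<lambda>k. K (w * x - t k) (f x)) UNIV - 1\<bar> \<le> Tw K t w x"
      unfolding Tw_def by (rule SUP_upper) (use False in auto)
    also have "\<dots> \<le> ereal (M2 * w powr (- \<theta>0))" using Tb by simp
    finally have le0: "\<bar>(1 / f x) * infsum (\<lambda>k. K (w * x - t k) (f x)) UNIV - 1\<bar> \<le> M2 * w powr (- \<theta>0)"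
      by simp
    have KfE: "Kf = (\<lambda>k. K (w * x - t k) (f x))" by (rule ext) (simp add: Kf_def)
    have le: "\<bar>(1 / f x) * infsum Kf UNIV - 1\<bar> \<le> M2 * w powr (- \<theta>0)"
      using le0 unfolding KfE .
    have "\<bar>infsum Kf UNIV - f x\<bar> = \<bar>f x\<bar> * \<bar>(1 / f x) * infsum Kf UNIV - 1\<bar>"
      using False by (simp add: abs_mult[symmetric] algebra_simps)
    also have "\<dots> \<le> \<bar>f x\<bar> * (M2 * w powr (- \<theta>0))" by (rule mult_left_mono[OF le]) simp
    finally show ?thesis by (simp add: mult.commute)
  qed
  have "ennreal \<bar>S_op K t w f x - f x\<bar> \<le> ennreal (\<bar>infsum (\<lambda>k. Ka k - Kf k) UNIV\<bar> + \<bar>infsum Kf UNIV - f x\<bar>)"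
    unfolding Seq by (rule ennreal_leI) linarith
  also have "\<dots> = ennreal \<bar>infsum (\<lambda>k. Ka k - Kf k) UNIV\<bar> + ennreal \<bar>infsum Kf UNIV - f x\<bar>"
    by (rule ennreal_plus) auto
  also have "\<dots> \<le> (E1 x + E2 x) + ennreal (M2 * w powr (- \<theta>0) * \<bar>f x\<bar>)"
    by (intro add_mono T1 ennreal_leI T2)
  finally show ?thesis .
qed

end


context mainctx begin

lemma Dk_pos: "0 < Dk n" using dk_pos by (simp add: Dk_def)
lemma Dk_ge: "\<delta> \<le> Dk n" using dk(1) by (simp add: Dk_def)
lemma Dk_le: "Dk n \<le> \<Delta>" using dk(2) by (simp add: Dk_def)

lemma int_Wk: "(\<integral>\<^sup>+s. Wk n s \<partial>lborel) = 1"
proof -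
  have "(\<integral>\<^sup>+s. Wk n s \<partial>lborel) = ennreal (w / Dk n) * emeasure lborel {0..<Dk n / w}"
    unfolding Wk_def by (rule nn_integral_cmult_indicator) simp
  also have "\<dots> = ennreal (w / Dk n) * ennreal (Dk n / w)"
    using Dk_pos[of n] w by simp
  also have "\<dots> = ennreal (w / Dk n * (Dk n / w))"
    by (rule ennreal_mult[symmetric]) (use Dk_pos[of n] w in auto)
  also have "w / Dk n * (Dk n / w) = 1" using Dk_pos[of n] w by simp
  finally show ?thesis by simp
qed

lemma jensen_inner:
  assumes [measurable]: "y \<in> borel_measurable borel"
  shows "pw p (\<integral>\<^sup>+s. Wk n s * y s \<partial>lborel) \<le> (\<integral>\<^sup>+s. Wk n s * pw p (y s) \<partial>lborel)"
  using jensen_pw[OF p, of "Wk n" lborel y 1] by (simp add: int_Wk)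

lemma jensen_outer:
  "pw p (\<Sum>n. ennreal (L (u - tk n)) * Y n) \<le> ennreal (m powr (p-1)) * (\<Sum>n. ennreal (L (u - tk n)) * pw p (Y n))"
proof -
  have "pw p (\<integral>\<^sup>+n. ennreal (L (u - tk n)) * Y n \<partial>count_space UNIV)
     \<le> ennreal (m powr (p-1)) * (\<integral>\<^sup>+n. ennreal (L (u - tk n)) * pw p (Y n) \<partial>count_space UNIV)"
  proof (rule jensen_pw[OF p])
    show "(\<integral>\<^sup>+n. ennreal (L (u - tk n)) \<partial>count_space UNIV) \<le> ennreal m"
      using sumL[of u] by (simp add: nn_integral_count_space_nat tk_def)
  qed (auto simp: m_nonneg)
  then show ?thesis by (simp add: nn_integral_count_space_nat)
qed

lemma tmono: "k1 < k2 \<Longrightarrow> t (k1 + 1) \<le> t k2"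
proof -
  assume "k1 < k2"
  then have "k1 + 1 \<le> k2" by simp
  moreover have "strict_mono t" using samp by (simp add: sampling_seq_def)
  ultimately show ?thesis by (simp add: strict_mono_less_eq)
qed

lemma disjoint_sum:
  "(\<Sum>n. indicator {tk n / w ..< tk n / w + Dk n / w} v :: ennreal) \<le> 1"
proof (cases "\<exists>n0. v \<in> {tk n0 / w ..< tk n0 / w + Dk n0 / w}")
  case False
  then have "(\<lambda>n. indicator {tk n / w ..< tk n / w + Dk n / w} v :: ennreal) = (\<lambda>n. 0)"
    by (auto simp: fun_eq_iff indicator_def)
  then show ?thesis by simp
next
  case True
  then obtain n0 where n0: "v \<in> {tk n0 / w ..< tk n0 / w + Dk n0 / w}" by blast
  have uniq: "n = n0" if "v \<in> {tk n / w ..< tk n / w + Dk n / w}" for n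
  proof (rule ccontr)
    assume ne: "n \<noteq> n0"
    then have kne: "int_decode n \<noteq> int_decode n0" by (simp add: int_decode_eq)
    have iv: "t k / w \<le> v \<and> v < t (k + 1) / w" if "v \<in> {tk n' / w ..< tk n' / w + Dk n' / w}" "k = int_decode n'" for n' k
      using that w by (simp add: tk_def Dk_def diff_divide_distrib)
    have A: "t (int_decode n) / w \<le> v \<and> v < t (int_decode n + 1) / w" using iv[OF that refl] .
    have B: "t (int_decode n0) / w \<le> v \<and> v < t (int_decode n0 + 1) / w" using iv[OF n0 refl] .
    show False
    proof (cases "int_decode n < int_decode n0")
      case True
      then have "t (int_decode n + 1) \<le> t (int_decode n0)" by (rule tmono)
      then have "t (int_decode n + 1) / w \<le> t (int_decode n0) / w" using w by (simp add: divide_right_mono)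
      then show False using A B by linarith
    next
      case False
      then have "int_decode n0 < int_decode n" using kne by simp
      then have "t (int_decode n0 + 1) \<le> t (int_decode n)" by (rule tmono)
      then have "t (int_decode n0 + 1) / w \<le> t (int_decode n) / w" using w by (simp add: divide_right_mono)
      then show False using A B by linarith
    qed
  qed
  have "(\<lambda>n. indicator {tk n / w ..< tk n / w + Dk n / w} v :: ennreal) = (\<lambda>n. if n = n0 then 1 else 0)"
  proof (rule ext)
    fix n
    show "(indicator {tk n / w ..< tk n / w + Dk n / w} v :: ennreal) = (if n = n0 then 1 else 0)"
    proof (cases "n = n0")
      case True then show ?thesis using n0 by simp
    next
      case False
      then have "v \<notin> {tk n / w ..< tk n / w + Dk n / w}" using uniq by blast
      then show ?thesis using False by simp
    qed
  qed
  moreover have "(\<lambda>n. if n = n0 then (1::ennreal) else 0) sums 1"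
    using sums_single[of n0 "\<lambda>_. 1::ennreal"] by simp
  ultimately show ?thesis by (simp add: sums_iff)
qed

lemma E1_meas[measurable]: "E1 \<in> borel_measurable borel"
  unfolding E1_def by measurable

lemma E2_meas[measurable]: "E2 \<in> borel_measurable borel"
  unfolding E2_def by measurable

end


context mainctx begin

definition H where "H v = (\<integral>\<^sup>+y. ennreal (L y) * ennreal (\<bar>f (v + y / w) - f v\<bar> powr p) \<partial>lborel)"

lemma H_meas[measurable]: "H \<in> borel_measurable borel"
  unfolding H_def by measurable

lemma pwE1: "pw p (E1 x) \<le> ennreal (m powr (p-1)) *
   (\<Sum>n. ennreal (L (w * x - tk n)) * (\<integral>\<^sup>+s. Wk n s * ennreal (\<bar>f (tk n / w + s) - f (x + s)\<bar> powr p) \<partial>lborel))"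
proof -
  have "pw p (E1 x) \<le> ennreal (m powr (p-1)) * (\<Sum>n. ennreal (L (w * x - tk n)) *
      pw p (\<integral>\<^sup>+s. Wk n s * ennreal \<bar>f (tk n / w + s) - f (x + s)\<bar> \<partial>lborel))"
    unfolding E1_def by (rule jensen_outer)
  also have "\<dots> \<le> ennreal (m powr (p-1)) *
   (\<Sum>n. ennreal (L (w * x - tk n)) * (\<integral>\<^sup>+s. Wk n s * ennreal (\<bar>f (tk n / w + s) - f (x + s)\<bar> powr p) \<partial>lborel))"
  proof (rule mult_left_mono[OF suminf_le])
    fix n
    have "pw p (\<integral>\<^sup>+s. Wk n s * ennreal \<bar>f (tk n / w + s) - f (x + s)\<bar> \<partial>lborel)
        \<le> (\<integral>\<^sup>+s. Wk n s * pw p (ennreal \<bar>f (tk n / w + s) - f (x + s)\<bar>) \<partial>lborel)"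
      by (rule jensen_inner) measurable
    then show "ennreal (L (w * x - tk n)) * pw p (\<integral>\<^sup>+s. Wk n s * ennreal \<bar>f (tk n / w + s) - f (x + s)\<bar> \<partial>lborel)
      \<le> ennreal (L (w * x - tk n)) * (\<integral>\<^sup>+s. Wk n s * ennreal (\<bar>f (tk n / w + s) - f (x + s)\<bar> powr p) \<partial>lborel)"
      by (intro mult_left_mono) simp_all
  qed (auto intro: summableI)
  finally show ?thesis .
qed

lemma inner_affine:
  "(\<integral>\<^sup>+x. ennreal (L (w * x - c)) * ennreal (\<bar>f (c / w + s) - f (x + s)\<bar> powr p) \<partial>lborel)
    = ennreal (1 / w) * H (c / w + s)"
proof -
  have "(\<integral>\<^sup>+x. ennreal (L (w * x - c)) * ennreal (\<bar>f (c / w + s) - f (x + s)\<bar> powr p) \<partial>lborel)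
      = ennreal \<bar>1 / w\<bar> * (\<integral>\<^sup>+y. ennreal (L (w * (c / w + (1 / w) * y) - c)) *
          ennreal (\<bar>f (c / w + s) - f ((c / w + (1 / w) * y) + s)\<bar> powr p) \<partial>lborel)"
    by (rule nn_integral_real_affine) (use w in auto)
  also have "\<dots> = ennreal (1 / w) * H (c / w + s)"
  proof -
    have "w * (c / w + (1 / w) * y) - c = y" for y using w by (simp add: field_simps)
    moreover have "\<bar>f (c / w + s) - f ((c / w + (1 / w) * y) + s)\<bar> = \<bar>f ((c / w + s) + y / w) - f (c / w + s)\<bar>" for y
      by (simp add: abs_minus_commute add_ac)
    ultimately show ?thesis using w unfolding H_def by simp
  qed
  finally show ?thesis .
qed

lemma term1:
  "(\<integral>\<^sup>+x. ennreal (L (w * x - tk n)) * (\<integral>\<^sup>+s. Wk n s * ennreal (\<bar>f (tk n / w + s) - f (x + s)\<bar> powr p) \<partial>lborel) \<partial>lborel)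
   \<le> ennreal (1 / \<delta>) * (\<integral>\<^sup>+v. indicator {tk n / w ..< tk n / w + Dk n / w} v * H v \<partial>lborel)"
proof -
  define c where "c = tk n"
  define d where "d = Dk n"
  have "(\<integral>\<^sup>+x. ennreal (L (w * x - c)) * (\<integral>\<^sup>+s. Wk n s * ennreal (\<bar>f (c / w + s) - f (x + s)\<bar> powr p) \<partial>lborel) \<partial>lborel)
     = (\<integral>\<^sup>+x. (\<integral>\<^sup>+s. Wk n s * (ennreal (L (w * x - c)) * ennreal (\<bar>f (c / w + s) - f (x + s)\<bar> powr p)) \<partial>lborel) \<partial>lborel)"
    by (intro nn_integral_cong) (simp add: nn_integral_cmult[symmetric] ac_simps)
  also have "\<dots> = (\<integral>\<^sup>+s. (\<integral>\<^sup>+x. Wk n s * (ennreal (L (w * x - c)) * ennreal (\<bar>f (c / w + s) - f (x + s)\<bar> powr p)) \<partial>lborel) \<partial>lborel)"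
    by (rule lborel_pair.Fubini'[symmetric]) measurable
  also have "\<dots> = (\<integral>\<^sup>+s. Wk n s * (ennreal (1 / w) * H (c / w + s)) \<partial>lborel)"
    by (intro nn_integral_cong) (simp add: nn_integral_cmult inner_affine)
  also have "\<dots> \<le> (\<integral>\<^sup>+s. ennreal (1 / \<delta>) * (indicator {0..<d / w} s * H (c / w + s)) \<partial>lborel)"
  proof (rule nn_integral_mono)
    fix s
    have "Wk n s * ennreal (1 / w) \<le> ennreal (1 / \<delta>) * indicator {0..<d / w} s"
    proof (cases "s \<in> {0..<d / w}")
      case True
      have "Wk n s * ennreal (1 / w) = ennreal (w / d) * ennreal (1 / w)"
        using True by (simp add: Wk_def d_def)
      also have "\<dots> = ennreal (w / d * (1 / w))"
        by (rule ennreal_mult[symmetric]) (use Dk_pos[of n] w in \<open>auto simp: d_def\<close>)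
      also have "w / d * (1 / w) = 1 / d" using w by simp
      also have "ennreal (1 / d) \<le> ennreal (1 / \<delta>)"
        using Dk_ge[of n] delta by (intro ennreal_leI divide_left_mono) (auto simp: d_def)
      finally show ?thesis using True by simp
    qed (simp add: Wk_def d_def)
    then have "Wk n s * ennreal (1 / w) * H (c / w + s) \<le> ennreal (1 / \<delta>) * indicator {0..<d / w} s * H (c / w + s)"
      by (rule mult_right_mono) simp
    then show "Wk n s * (ennreal (1 / w) * H (c / w + s)) \<le> ennreal (1 / \<delta>) * (indicator {0..<d / w} s * H (c / w + s))"
      by (simp add: ac_simps)
  qed
  also have "\<dots> = ennreal (1 / \<delta>) * (\<integral>\<^sup>+s. indicator {0..<d / w} s * H (c / w + s) \<partial>lborel)"
    by (rule nn_integral_cmult) measurable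
  also have "(\<integral>\<^sup>+s. indicator {0..<d / w} s * H (c / w + s) \<partial>lborel)
      = (\<integral>\<^sup>+v. indicator {c / w ..< c / w + d / w} v * H v \<partial>lborel)"
  proof -
    have "(\<integral>\<^sup>+v. indicator {c / w ..< c / w + d / w} v * H v \<partial>lborel)
        = (\<integral>\<^sup>+s. indicator {c / w ..< c / w + d / w} (s + c / w) * H (s + c / w) \<partial>lborel)"
      by (rule nn_integral_trans[symmetric]) measurable
    also have "\<dots> = (\<integral>\<^sup>+s. indicator {0..<d / w} s * H (c / w + s) \<partial>lborel)"
      by (intro nn_integral_cong) (simp add: indicator_def add.commute)
    finally show ?thesis by simp
  qed
  finally show ?thesis by (simp add: c_def d_def)
qed

end


context mainctx begin

definition NL where "NL = (\<integral>\<^sup>+y. ennreal (L y) \<partial>lborel)"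
definition NLp where "NLp = (\<integral>\<^sup>+y. ennreal (L y * \<bar>y\<bar> powr p) \<partial>lborel)"
definition c0 where "c0 = 2 powr (p - 1) * om (1 / w) powr p"

lemma c0_nonneg: "0 \<le> c0" by (simp add: c0_def)

lemma intH: "(\<integral>\<^sup>+v. H v \<partial>lborel) \<le> ennreal c0 * (NL + NLp)"
proof -
  have "(\<integral>\<^sup>+v. H v \<partial>lborel) = (\<integral>\<^sup>+y. (\<integral>\<^sup>+v. ennreal (L y) * ennreal (\<bar>f (v + y / w) - f v\<bar> powr p) \<partial>lborel) \<partial>lborel)"
    unfolding H_def by (rule lborel_pair.Fubini'[symmetric]) measurable
  also have "\<dots> = (\<integral>\<^sup>+y. ennreal (L y) * D (y / w) \<partial>lborel)"
    by (intro nn_integral_cong) (simp add: nn_integral_cmult D_def)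
  also have "\<dots> \<le> (\<integral>\<^sup>+y. ennreal c0 * (ennreal (L y) + ennreal (L y * \<bar>y\<bar> powr p)) \<partial>lborel)"
  proof (rule nn_integral_mono)
    fix y
    have om0: "0 \<le> om (1 / w)" using omega_props(2)[of "1/w"] w by simp
    have "((1 + \<bar>y\<bar>) * om (1 / w)) powr p = (1 + \<bar>y\<bar>) powr p * om (1 / w) powr p"
      using om0 by (simp add: powr_mult)
    also have "\<dots> \<le> 2 powr (p - 1) * (1 + \<bar>y\<bar> powr p) * om (1 / w) powr p"
      by (intro mult_right_mono pow_one_plus[OF p]) auto
    also have "\<dots> = c0 * (1 + \<bar>y\<bar> powr p)" by (simp add: c0_def)
    finally have X: "((1 + \<bar>y\<bar>) * om (1 / w)) powr p \<le> c0 * (1 + \<bar>y\<bar> powr p)" .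
    have "ennreal (L y) * D (y / w) \<le> ennreal (L y) * ennreal (((1 + \<bar>y\<bar>) * om (1 / w)) powr p)"
      by (intro mult_left_mono D_lin w) simp
    also have "\<dots> \<le> ennreal (L y) * ennreal (c0 * (1 + \<bar>y\<bar> powr p))"
      by (intro mult_left_mono ennreal_leI X) simp
    also have "\<dots> = ennreal (L y * (c0 * (1 + \<bar>y\<bar> powr p)))"
      by (rule ennreal_mult[symmetric]) (auto simp: Lnn c0_nonneg)
    also have "L y * (c0 * (1 + \<bar>y\<bar> powr p)) = c0 * (L y + L y * \<bar>y\<bar> powr p)"
      by (simp add: algebra_simps)
    also have "ennreal (c0 * (L y + L y * \<bar>y\<bar> powr p)) = ennreal c0 * ennreal (L y + L y * \<bar>y\<bar> powr p)"
      by (rule ennreal_mult) (auto simp: Lnn c0_nonneg)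
    also have "ennreal (L y + L y * \<bar>y\<bar> powr p) = ennreal (L y) + ennreal (L y * \<bar>y\<bar> powr p)"
      by (rule ennreal_plus) (auto simp: Lnn)
    finally show "ennreal (L y) * D (y / w) \<le> ennreal c0 * (ennreal (L y) + ennreal (L y * \<bar>y\<bar> powr p))" .
  qed
  also have "\<dots> = ennreal c0 * (NL + NLp)"
    unfolding NL_def NLp_def by (simp add: nn_integral_cmult nn_integral_add)
  finally show ?thesis .
qed

lemma E1_bound: "(\<integral>\<^sup>+x. pw p (E1 x) \<partial>lborel) \<le> ennreal (m powr (p-1)) * (ennreal (1 / \<delta>) * (ennreal c0 * (NL + NLp)))"
proof -
  define T where "T n x = ennreal (L (w * x - tk n)) * (\<integral>\<^sup>+s. Wk n s * ennreal (\<bar>f (tk n / w + s) - f (x + s)\<bar> powr p) \<partial>lborel)" for n x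
  have Tm[measurable]: "T n \<in> borel_measurable borel" for n unfolding T_def by measurable
  have "(\<integral>\<^sup>+x. pw p (E1 x) \<partial>lborel) \<le> (\<integral>\<^sup>+x. ennreal (m powr (p-1)) * (\<Sum>n. T n x) \<partial>lborel)"
    by (rule nn_integral_mono) (simp add: T_def pwE1)
  also have "\<dots> = ennreal (m powr (p-1)) * (\<Sum>n. (\<integral>\<^sup>+x. T n x \<partial>lborel))"
    by (simp add: nn_integral_cmult nn_integral_suminf)
  also have "\<dots> \<le> ennreal (m powr (p-1)) * (\<Sum>n. ennreal (1 / \<delta>) * (\<integral>\<^sup>+v. indicator {tk n / w ..< tk n / w + Dk n / w} v * H v \<partial>lborel))"
    by (rule mult_left_mono[OF suminf_le]) (auto simp: T_def term1 intro: summableI)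
  also have "(\<Sum>n. ennreal (1 / \<delta>) * (\<integral>\<^sup>+v. indicator {tk n / w ..< tk n / w + Dk n / w} v * H v \<partial>lborel))
     = ennreal (1 / \<delta>) * (\<integral>\<^sup>+v. (\<Sum>n. indicator {tk n / w ..< tk n / w + Dk n / w} v) * H v \<partial>lborel)"
    by (simp add: nn_integral_suminf[symmetric])
  also have "(\<integral>\<^sup>+v. (\<Sum>n. indicator {tk n / w ..< tk n / w + Dk n / w} v) * H v \<partial>lborel) \<le> (\<integral>\<^sup>+v. H v \<partial>lborel)"
  proof (rule nn_integral_mono)
    fix v
    show "(\<Sum>n. indicator {tk n / w ..< tk n / w + Dk n / w} v) * H v \<le> H v"
      using mult_right_mono[OF disjoint_sum[of v], of "H v"] by simp
  qed
  also note intH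
  finally show ?thesis by (simp add: mult_left_mono)
qed

end


context mainctx begin

definition Q where "Q x = (\<integral>\<^sup>+s. indicator {0..\<Delta> / w} s * ennreal (\<bar>f (x + s) - f x\<bar> powr p) \<partial>lborel)"

lemma Q_meas[measurable]: "Q \<in> borel_measurable borel" unfolding Q_def by measurable

lemma Wk_le: "Wk n s \<le> ennreal (w / \<delta>) * indicator {0..\<Delta> / w} s"
proof (cases "s \<in> {0..<Dk n / w}")
  case True
  have "Dk n / w \<le> \<Delta> / w" using Dk_le[of n] w by (simp add: divide_right_mono)
  then have "s \<in> {0..\<Delta> / w}" using True by auto
  moreover have "w / Dk n \<le> w / \<delta>" using Dk_ge[of n] delta w by (intro divide_left_mono) auto
  ultimately show ?thesis using True by (simp add: Wk_def ennreal_leI)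
qed (simp add: Wk_def)

lemma pwE2: "pw p (E2 x) \<le> ennreal (m powr (p-1)) * (ennreal m * (ennreal (w / \<delta>) * Q x))"
proof -
  have "pw p (E2 x) \<le> ennreal (m powr (p-1)) * (\<Sum>n. ennreal (L (w * x - tk n)) *
      pw p (\<integral>\<^sup>+s. Wk n s * ennreal \<bar>f (x + s) - f x\<bar> \<partial>lborel))"
    unfolding E2_def by (rule jensen_outer)
  also have "\<dots> \<le> ennreal (m powr (p-1)) * (\<Sum>n. ennreal (L (w * x - tk n)) * (ennreal (w / \<delta>) * Q x))"
  proof (rule mult_left_mono[OF suminf_le])
    fix n
    have "pw p (\<integral>\<^sup>+s. Wk n s * ennreal \<bar>f (x + s) - f x\<bar> \<partial>lborel)
        \<le> (\<integral>\<^sup>+s. Wk n s * pw p (ennreal \<bar>f (x + s) - f x\<bar>) \<partial>lborel)"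
      by (rule jensen_inner) measurable
    also have "\<dots> \<le> (\<integral>\<^sup>+s. ennreal (w / \<delta>) * (indicator {0..\<Delta> / w} s * ennreal (\<bar>f (x + s) - f x\<bar> powr p)) \<partial>lborel)"
      by (rule nn_integral_mono) (simp add: mult.assoc[symmetric] mult_right_mono Wk_le)
    also have "\<dots> = ennreal (w / \<delta>) * Q x"
      unfolding Q_def by (rule nn_integral_cmult) measurable
    finally show "ennreal (L (w * x - tk n)) * pw p (\<integral>\<^sup>+s. Wk n s * ennreal \<bar>f (x + s) - f x\<bar> \<partial>lborel)
      \<le> ennreal (L (w * x - tk n)) * (ennreal (w / \<delta>) * Q x)"
      by (intro mult_left_mono) simp_all
  qed (auto intro: summableI)
  also have "(\<Sum>n. ennreal (L (w * x - tk n)) * (ennreal (w / \<delta>) * Q x))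
      = (\<Sum>n. ennreal (L (w * x - tk n))) * (ennreal (w / \<delta>) * Q x)" by simp
  also have "\<dots> \<le> ennreal m * (ennreal (w / \<delta>) * Q x)"
    by (rule mult_right_mono) (simp_all add: sumL tk_def)
  finally show ?thesis by (simp add: mult_left_mono)
qed

lemma intQ: "(\<integral>\<^sup>+x. Q x \<partial>lborel) \<le> ennreal (\<Delta> / w) * ennreal (om (\<Delta> / w) powr p)"
proof -
  have d: "0 \<le> \<Delta> / w" using delta w by simp
  have "(\<integral>\<^sup>+x. Q x \<partial>lborel) = (\<integral>\<^sup>+s. (\<integral>\<^sup>+x. indicator {0..\<Delta> / w} s * ennreal (\<bar>f (x + s) - f x\<bar> powr p) \<partial>lborel) \<partial>lborel)"
    unfolding Q_def by (rule lborel_pair.Fubini') measurable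
  also have "\<dots> = (\<integral>\<^sup>+s. indicator {0..\<Delta> / w} s * D s \<partial>lborel)"
    by (intro nn_integral_cong) (simp add: nn_integral_cmult D_def)
  also have "\<dots> \<le> (\<integral>\<^sup>+s. ennreal (om (\<Delta> / w) powr p) * indicator {0..\<Delta> / w} s \<partial>lborel)"
  proof (rule nn_integral_mono)
    fix s
    show "indicator {0..\<Delta> / w} s * D s \<le> ennreal (om (\<Delta> / w) powr p) * indicator {0..\<Delta> / w} s"
    proof (cases "s \<in> {0..\<Delta> / w}")
      case True
      then have "\<bar>s\<bar> \<le> \<Delta> / w" by auto
      from omega_props(4)[OF d this] show ?thesis using True by simp
    qed simp
  qed
  also have "\<dots> = ennreal (om (\<Delta> / w) powr p) * ennreal (\<Delta> / w)"
    using d by (simp add: nn_integral_cmult_indicator)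
  finally show ?thesis by (simp add: mult.commute)
qed

lemma E2_bound: "(\<integral>\<^sup>+x. pw p (E2 x) \<partial>lborel) \<le>
   ennreal (m powr (p-1)) * (ennreal m * (ennreal (w / \<delta>) * (ennreal (\<Delta> / w) * ennreal (om (\<Delta> / w) powr p))))"
proof -
  have "(\<integral>\<^sup>+x. pw p (E2 x) \<partial>lborel) \<le> (\<integral>\<^sup>+x. ennreal (m powr (p-1)) * (ennreal m * (ennreal (w / \<delta>) * Q x)) \<partial>lborel)"
    by (rule nn_integral_mono) (rule pwE2)
  also have "\<dots> = ennreal (m powr (p-1)) * (ennreal m * (ennreal (w / \<delta>) * (\<integral>\<^sup>+x. Q x \<partial>lborel)))"
    by (simp add: nn_integral_cmult)
  also have "\<dots> \<le> ennreal (m powr (p-1)) * (ennreal m * (ennreal (w / \<delta>) * (ennreal (\<Delta> / w) * ennreal (om (\<Delta> / w) powr p))))"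
    by (intro mult_left_mono intQ) simp_all
  finally show ?thesis .
qed

end


context mainctx begin

lemma powr_prod4:
  fixes a b c d q :: real
  assumes "0 \<le> a" "0 \<le> b" "0 \<le> c" "0 \<le> d"
  shows "(a * b * c * d) powr q = a powr q * b powr q * c powr q * d powr q"
  using assms by (simp add: powr_mult)

lemma ennreal_mult4:
  fixes a b c d :: real
  assumes "0 \<le> a" "0 \<le> b" "0 \<le> c" "0 \<le> d"
  shows "ennreal a * (ennreal b * (ennreal c * ennreal d)) = ennreal (a * (b * (c * d)))"
  using assms by (simp add: ennreal_mult)

lemma ennreal_mult5:
  fixes a b c d e :: real
  assumes "0 \<le> a" "0 \<le> b" "0 \<le> c" "0 \<le> d" "0 \<le> e"
  shows "ennreal a * (ennreal b * (ennreal c * (ennreal d * ennreal e))) = ennreal (a * (b * (c * (d * e))))"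
  using assms by (simp add: ennreal_mult)

lemma final:
  assumes Lint: "integrable lborel L"
    and Mp: "(\<integral>\<^sup>+u. ennreal (L u * \<bar>u\<bar> powr p) \<partial>lborel) < \<infinity>"
    and M2: "0 \<le> M2"
    and Tb: "\<forall>x. Tw K t w x \<le> ereal (M2 * w powr (- \<theta>0))"
  shows "Lp_norm p (\<lambda>x. S_op K t w f x - f x)
       \<le> ereal (\<delta> powr (- 1 / p) * (2 * m0 L t) powr ((p - 1) / p)
                 * ((LINT u|lborel. L u) + (LINT u|lborel. L u * \<bar>u\<bar> powr p)) powr (1 / p))
           * omega_p p f (1 / w)
         + ereal (\<delta> powr (- 1 / p) * m0 L t * \<Delta> powr (1 / p)) * omega_p p f (\<Delta> / w)
         + ereal (M2 * w powr (- \<theta>0)) * Lp_norm p f"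
proof -
  define NLr where "NLr = (LINT u|lborel. L u)"
  define NLpr where "NLpr = (LINT u|lborel. L u * \<bar>u\<bar> powr p)"
  define \<omega>1 where "\<omega>1 = om (1 / w)"
  define \<omega>2 where "\<omega>2 = om (\<Delta> / w)"
  define C3 where "C3 = M2 * w powr (- \<theta>0)"
  have C3: "0 \<le> C3" using M2 by (simp add: C3_def)
  have d1: "0 \<le> 1 / w" and d2: "0 \<le> \<Delta> / w" using w delta by auto
  have \<omega>1: "0 \<le> \<omega>1" "omega_p p f (1 / w) = ereal \<omega>1" using omega_props[OF d1] by (auto simp: \<omega>1_def)
  have \<omega>2: "0 \<le> \<omega>2" "omega_p p f (\<Delta> / w) = ereal \<omega>2" using omega_props[OF d2] by (auto simp: \<omega>2_def)
  have NL: "NL = ennreal NLr" "0 \<le> NLr"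
  proof -
    show "NL = ennreal NLr" unfolding NL_def NLr_def
      by (rule nn_integral_eq_integral[OF Lint]) (simp add: Lnn)
    show "0 \<le> NLr" unfolding NLr_def by (rule integral_nonneg_AE) (simp add: Lnn)
  qed
  have Lpint: "integrable lborel (\<lambda>u. L u * \<bar>u\<bar> powr p)"
  proof (rule integrableI_bounded)
    show "(\<lambda>u. L u * \<bar>u\<bar> powr p) \<in> borel_measurable lborel" by measurable
    have "(\<integral>\<^sup>+u. ennreal (norm (L u * \<bar>u\<bar> powr p)) \<partial>lborel) = (\<integral>\<^sup>+u. ennreal (L u * \<bar>u\<bar> powr p) \<partial>lborel)"
      by (intro nn_integral_cong) (simp add: Lnn)
    then show "(\<integral>\<^sup>+u. ennreal (norm (L u * \<bar>u\<bar> powr p)) \<partial>lborel) < \<infinity>" using Mp by simp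
  qed
  have NLp: "NLp = ennreal NLpr" "0 \<le> NLpr"
  proof -
    show "NLp = ennreal NLpr" unfolding NLp_def NLpr_def
      by (rule nn_integral_eq_integral[OF Lpint]) (simp add: Lnn)
    show "0 \<le> NLpr" unfolding NLpr_def by (rule integral_nonneg_AE) (simp add: Lnn)
  qed
  define A1 where "A1 = \<delta> powr (- 1 / p) * (2 * m) powr ((p - 1) / p) * (NLr + NLpr) powr (1 / p) * \<omega>1"
  define A2 where "A2 = \<delta> powr (- 1 / p) * m * \<Delta> powr (1 / p) * \<omega>2"
  define A3 where "A3 = C3 * nf"
  have A1: "0 \<le> A1" using \<omega>1 by (simp add: A1_def)
  have A2: "0 \<le> A2" using \<omega>2 m_nonneg by (simp add: A2_def)
  have A3: "0 \<le> A3" using C3 nf_nonneg by (simp add: A3_def)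
  have dpow: "(\<delta> powr (- 1 / p)) powr p = 1 / \<delta>"
  proof -
    have "(\<delta> powr (- 1 / p)) powr p = \<delta> powr ((- 1 / p) * p)" by (rule powr_powr)
    also have "(- 1 / p) * p = - 1" using p0 by simp
    also have "\<delta> powr (- 1) = 1 / \<delta>" using delta by (simp add: powr_minus divide_inverse)
    finally show ?thesis .
  qed
  have B1: "(\<integral>\<^sup>+x. pw p (E1 x) \<partial>lborel) \<le> ennreal (A1 powr p)"
  proof -
    have "(\<integral>\<^sup>+x. pw p (E1 x) \<partial>lborel) \<le> ennreal (m powr (p-1)) * (ennreal (1 / \<delta>) * (ennreal c0 * (NL + NLp)))"
      by (rule E1_bound)
    also have "\<dots> = ennreal (m powr (p-1) * (1 / \<delta> * (c0 * (NLr + NLpr))))"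
    proof -
      have "NL + NLp = ennreal (NLr + NLpr)" using NL NLp by simp
      then show ?thesis using NL NLp delta c0_nonneg by (simp only:) (rule ennreal_mult4, auto)
    qed
    also have "m powr (p-1) * (1 / \<delta> * (c0 * (NLr + NLpr))) = A1 powr p"
    proof -
      have "A1 powr p = (\<delta> powr (- 1 / p)) powr p * ((2 * m) powr ((p - 1) / p)) powr p
          * ((NLr + NLpr) powr (1 / p)) powr p * \<omega>1 powr p"
        unfolding A1_def by (rule powr_prod4) (use \<omega>1 in auto)
      also have "\<dots> = 1 / \<delta> * (2 powr (p - 1) * m powr (p - 1)) * (NLr + NLpr) * \<omega>1 powr p"
        using p0 NL NLp m_nonneg delta by (simp add: dpow powr_powr powr_mult)
      finally show ?thesis by (simp add: c0_def \<omega>1_def ac_simps)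
    qed
    finally show ?thesis .
  qed
  have B2: "(\<integral>\<^sup>+x. pw p (E2 x) \<partial>lborel) \<le> ennreal (A2 powr p)"
  proof -
    have "(\<integral>\<^sup>+x. pw p (E2 x) \<partial>lborel) \<le> ennreal (m powr (p-1)) * (ennreal m * (ennreal (w / \<delta>) * (ennreal (\<Delta> / w) * ennreal (om (\<Delta> / w) powr p))))"
      by (rule E2_bound)
    also have "\<dots> = ennreal (m powr (p-1) * (m * (w / \<delta> * (\<Delta> / w * \<omega>2 powr p))))"
      unfolding \<omega>2_def by (rule ennreal_mult5) (use m_nonneg delta w in auto)
    also have "m powr (p-1) * (m * (w / \<delta> * (\<Delta> / w * \<omega>2 powr p))) = A2 powr p"
    proof -
      have mm: "m powr (p-1) * m = m powr p"
      proof (cases "m = 0")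
        case False then show ?thesis using m_nonneg powr_split1[of m p] by simp
      qed simp
      have "A2 powr p = (\<delta> powr (- 1 / p)) powr p * m powr p * (\<Delta> powr (1 / p)) powr p * \<omega>2 powr p"
        unfolding A2_def by (rule powr_prod4) (use \<omega>2 m_nonneg in auto)
      also have "\<dots> = 1 / \<delta> * m powr p * \<Delta> * \<omega>2 powr p"
        using p0 delta by (simp add: dpow powr_powr)
      also have "\<dots> = m powr (p-1) * m * (w / \<delta> * (\<Delta> / w * \<omega>2 powr p))"
        unfolding mm using w by simp
      finally show ?thesis by simp
    qed
    finally show ?thesis .
  qed
  have B3: "(\<integral>\<^sup>+x. pw p (ennreal (C3 * \<bar>f x\<bar>)) \<partial>lborel) \<le> ennreal (A3 powr p)"
  proof -
    have "(\<integral>\<^sup>+x. pw p (ennreal (C3 * \<bar>f x\<bar>)) \<partial>lborel) = (\<integral>\<^sup>+x. ennreal (C3 powr p) * ennreal (\<bar>f x\<bar> powr p) \<partial>lborel)"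
      using C3 by (intro nn_integral_cong) (simp add: ennreal_mult pw_mult[OF p0])
    also have "\<dots> = ennreal (C3 powr p) * If"
      unfolding If_def by (rule nn_integral_cmult) measurable
    also have "\<dots> = ennreal (A3 powr p)"
      unfolding If_eq A3_def using C3 nf_nonneg by (simp add: powr_mult ennreal_mult)
    finally show ?thesis by simp
  qed
  have B12: "(\<integral>\<^sup>+x. pw p (E1 x + E2 x) \<partial>lborel) \<le> ennreal ((A1 + A2) powr p)"
    by (rule minkowski_pw[OF p _ _ A1 A2 B1 B2]) measurable
  have B123: "(\<integral>\<^sup>+x. pw p (E1 x + E2 x + ennreal (C3 * \<bar>f x\<bar>)) \<partial>lborel) \<le> ennreal ((A1 + A2 + A3) powr p)"
    by (rule minkowski_pw[OF p _ _ _ A3 B12 B3]) (use A1 A2 in auto)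
  define I where "I = (\<integral>\<^sup>+x. ennreal (\<bar>S_op K t w f x - f x\<bar> powr p) \<partial>lborel)"
  have "I = (\<integral>\<^sup>+x. pw p (ennreal \<bar>S_op K t w f x - f x\<bar>) \<partial>lborel)" by (simp add: I_def)
  also have "\<dots> \<le> (\<integral>\<^sup>+x. pw p (E1 x + E2 x + ennreal (C3 * \<bar>f x\<bar>)) \<partial>lborel)"
    by (intro nn_integral_mono pw_mono[OF p0]) (use pointwise[OF Tb] in \<open>simp add: C3_def\<close>)
  also note B123
  finally have Ile: "I \<le> ennreal ((A1 + A2 + A3) powr p)" .
  then have Ifin: "I \<noteq> top" by (metis ennreal_less_top less_le_trans order.strict_iff_not)
  have "enn2real I \<le> (A1 + A2 + A3) powr p" using Ile by (simp add: enn2real_leI)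
  then have "enn2real I powr (1/p) \<le> ((A1 + A2 + A3) powr p) powr (1/p)"
    using p0 by (intro powr_mono2) auto
  also have "\<dots> = A1 + A2 + A3" using p0 A1 A2 A3 by (simp add: powr_powr)
  finally have main: "Lp_norm p (\<lambda>x. S_op K t w f x - f x) \<le> ereal (A1 + A2 + A3)"
    using Ifin by (simp add: Lp_norm_def I_def[symmetric] Let_def)
  have rhs: "ereal (\<delta> powr (- 1 / p) * (2 * m0 L t) powr ((p - 1) / p)
                 * ((LINT u|lborel. L u) + (LINT u|lborel. L u * \<bar>u\<bar> powr p)) powr (1 / p))
           * omega_p p f (1 / w)
         + ereal (\<delta> powr (- 1 / p) * m0 L t * \<Delta> powr (1 / p)) * omega_p p f (\<Delta> / w)
         + ereal (M2 * w powr (- \<theta>0)) * Lp_norm p f = ereal (A1 + A2 + A3)"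
    unfolding \<omega>1(2) \<omega>2(2) Lp_norm_f by (simp add: A1_def A2_def A3_def C3_def NLr_def NLpr_def)
  show ?thesis unfolding rhs by (rule main)
qed

end

theorem theorem3p2:
  fixes p \<delta> \<Delta> M2 \<theta>0 :: real
    and t :: "int \<Rightarrow> real"
    and K :: "real \<Rightarrow> real \<Rightarrow> real"
    and L :: "real \<Rightarrow> real"
  assumes p: "1 \<le> p"
    and samp: "sampling_seq t \<delta> \<Delta>"
    and ker: "kernel_lip K t L"
    and L1: "cond_L1 L"
    and L2: "cond_L2 L t"
    and m0_fin: "m0_enn L t < \<infinity>"
    and Mp: "(\<integral>\<^sup>+ u. ennreal (L u * \<bar>u\<bar> powr p) \<partial>lborel) < \<infinity>"
    and M2: "M2 > 0" and \<theta>0: "\<theta>0 > 0"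
    and Tbound: "\<forall>\<^sub>F w in at_top. \<forall>x. Tw K t w x \<le> ereal (M2 * w powr (- \<theta>0))"
  shows "\<forall>f. in_Lp p f \<longrightarrow>
    (\<forall>\<^sub>F w in at_top.
       Lp_norm p (\<lambda>x. S_op K t w f x - f x)
       \<le> ereal (\<delta> powr (- 1 / p) * (2 * m0 L t) powr ((p - 1) / p)
                 * ((LINT u|lborel. L u) + (LINT u|lborel. L u * \<bar>u\<bar> powr p)) powr (1 / p))
           * omega_p p f (1 / w)
         + ereal (\<delta> powr (- 1 / p) * m0 L t * \<Delta> powr (1 / p)) * omega_p p f (\<Delta> / w)
         + ereal (M2 * w powr (- \<theta>0)) * Lp_norm p f)"
proof (intro allI impI)
  fix f assume fL: "in_Lp p f"
  interpret lpf p f using p fL by unfold_locales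
  have ev: "\<forall>\<^sub>F w in at_top. 0 < w \<and> (\<forall>x. Tw K t w x \<le> ereal (M2 * w powr (- \<theta>0)))"
    using eventually_conj[OF eventually_gt_at_top[of 0] Tbound] by simp
  show "\<forall>\<^sub>F w in at_top.
       Lp_norm p (\<lambda>x. S_op K t w f x - f x)
       \<le> ereal (\<delta> powr (- 1 / p) * (2 * m0 L t) powr ((p - 1) / p)
                 * ((LINT u|lborel. L u) + (LINT u|lborel. L u * \<bar>u\<bar> powr p)) powr (1 / p))
           * omega_p p f (1 / w)
         + ereal (\<delta> powr (- 1 / p) * m0 L t * \<Delta> powr (1 / p)) * omega_p p f (\<Delta> / w)
         + ereal (M2 * w powr (- \<theta>0)) * Lp_norm p f"
  proof (rule eventually_mono[OF ev])
    fix w assume wT: "0 < w \<and> (\<forall>x. Tw K t w x \<le> ereal (M2 * w powr (- \<theta>0)))"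
    interpret mainctx p f \<delta> \<Delta> t K L w using p fL samp ker m0_fin wT by unfold_locales auto
    show "Lp_norm p (\<lambda>x. S_op K t w f x - f x)
       \<le> ereal (\<delta> powr (- 1 / p) * (2 * m0 L t) powr ((p - 1) / p)
                 * ((LINT u|lborel. L u) + (LINT u|lborel. L u * \<bar>u\<bar> powr p)) powr (1 / p))
           * omega_p p f (1 / w)
         + ereal (\<delta> powr (- 1 / p) * m0 L t * \<Delta> powr (1 / p)) * omega_p p f (\<Delta> / w)
         + ereal (M2 * w powr (- \<theta>0)) * Lp_norm p f"
      by (rule final) (use L1 Mp M2 wT in \<open>auto simp: cond_L1_def\<close>)
  qed
qed

end
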